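(* Let $P$ be a finite graded bowtie-free poset of rank $n$ with $\hat0,\hat1$ and a good $\mathcal{H}_n(0)$ action $U_1,\dots,U_{n-1}$, and for each maximal chain $\mathfrak m$ let $\omega_{\mathfrak m}$ be as defined below. Then: (a) if $U_{i_1}\cdots U_{i_r}(\mathfrak m)=\mathfrak m_0$ is restless, then $s_{i_1}\cdots s_{i_r}$ is a reduced expression for $\omega_{\mathfrak m}$, and conversely for every reduced expression $\omega_{\mathfrak m}=s_{j_1}\cdots s_{j_r}$ the expression $U_{j_1}\cdots U_{j_r}(\mathfrak m)=\mathfrak m_0$ is restless; (b) for $i\in[n-1]$, the permutation $\omega_{\mathfrak m}$ has a descent at $i$ if and only if $U_i(\mathfrak m)\ne\mathfrak m$, and in that case $\omega_{U_i(\mathfrak m)}=\omega_{\mathfrak m}s_i$.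
   Context: $s_i$ is the adjacent transposition $(i\ i+1)$; permutations compose right to left; a permutation $\omega$ has a descent at $i$ if $\omega(i)>\omega(i+1)$. Bowtie-free: no distinct $a,b,c,d$ with $a$ and $b$ each covering both $c$ and $d$. A good $\mathcal{H}_n(0)$ action is a family $U_1,\dots,U_{n-1}$ of maps on the set $\mathcal{M}(P)$ of maximal chains with: $U_i(\mathfrak m)$ agrees with $\mathfrak m$ except possibly at rank $i$; $U_i^2=U_i$; $U_iU_j=U_jU_i$ for $|i-j|\ge2$; $U_iU_{i+1}U_i=U_{i+1}U_iU_{i+1}$; and $\omega F_P=\mathrm{ch}(\chi_P)$ ($\chi_P$ the character of the $\mathcal{H}_n(0)$-module $\mathbb{C}\mathcal{M}(P)$ with $T_i=-U_i$, $F_P$ Ehrenborg's flag quasisymmetric function, $\omega(L_{S,n})=L_{[n-1]\setminus S,n}$, $\mathrm{ch}(\chi_S)=L_{S,n}$ for the one-dimensional characters $\chi_S$). An expression $U_{i_1}\cdots U_{i_r}(\mathfrak m)=\mathfrak m'$ is restless if each successive application of $U_{i_r},U_{i_{r-1}},\dots,U_{i_1}$ changes the chain. Facts from the paper: $P$ has a unique maximal chain $\mathfrak m_0$ with $U_i(\mathfrak m_0)=\mathfrak m_0$ for all $i$; for every maximal chain $\mathfrak m$ there is a restless expression $U_{i_1}\cdots U_{i_r}(\mathfrak m)=\mathfrak m_0$; and the permutation $s_{i_1}\cdots s_{i_r}$ does not depend on the choice of restless expression. This permutation is denoted $\omega_{\mathfrak m}$. *)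

theory Defs
  imports "HOL-Combinatorics.Transposition"
begin

definition is_chain :: "'a::order set \<Rightarrow> bool" where
  "is_chain S \<longleftrightarrow> (\<forall>x\<in>S. \<forall>y\<in>S. x \<le> y \<or> y \<le> x)"

definition maximal_chain :: "'a::order set \<Rightarrow> bool" where
  "maximal_chain S \<longleftrightarrow> is_chain S \<and> (\<forall>T. is_chain T \<and> S \<subseteq> T \<longrightarrow> T = S)"

definition covers :: "'a::order \<Rightarrow> 'a \<Rightarrow> bool" where
  "covers y x \<longleftrightarrow> x < y \<and> \<not> (\<exists>z. x < z \<and> z < y)"

definition has_bot_top :: "'a::order itself \<Rightarrow> bool" where
  "has_bot_top _ \<longleftrightarrow> (\<exists>b::'a. \<forall>x. b \<le> x) \<and> (\<exists>t::'a. \<forall>x. x \<le> t)"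

definition graded_rank :: "'a::order itself \<Rightarrow> nat \<Rightarrow> bool" where
  "graded_rank _ n \<longleftrightarrow> (\<forall>S::'a set. maximal_chain S \<longrightarrow> card S = n + 1)"

definition bowtie_free :: "'a::order itself \<Rightarrow> bool" where
  "bowtie_free _ \<longleftrightarrow> \<not> (\<exists>a b c d :: 'a. distinct [a, b, c, d] \<and>
      covers a c \<and> covers a d \<and> covers b c \<and> covers b d)"

definition rank :: "'a::{order,finite} \<Rightarrow> nat" where
  "rank x = Max {card S - 1 | S. is_chain S \<and> S \<noteq> {} \<and> (\<forall>y\<in>S. y \<le> x)}"

text \<open>Maximal chains, listed in increasing order; entry i is the element of rank i.\<close>
definition mchains :: "'a::order itself \<Rightarrow> 'a list set" where
  "mchains _ = {c. sorted_wrt (<) c \<and> maximal_chain (set c)}"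

definition flag_f :: "'a::{order,finite} itself \<Rightarrow> nat set \<Rightarrow> nat" where
  "flag_f _ J = card {C::'a set. is_chain C \<and> rank ` C = J}"

section \<open>Quasisymmetric functions of degree n, as coefficient vectors in the
  monomial basis M_S, S \<subseteq> [n-1]\<close>

text \<open>Ehrenborg's flag quasisymmetric function: F_P = sum_J alpha_P(J) M_J\<close>
definition F_P :: "'a::{order,finite} itself \<Rightarrow> nat \<Rightarrow> nat set \<Rightarrow> int" where
  "F_P tp n T = (if T \<subseteq> {1..<n} then int (flag_f tp T) else 0)"

text \<open>Fundamental quasisymmetric function L_{S,n} = sum_{S \<subseteq> T \<subseteq> [n-1]} M_T\<close>
definition L_fund :: "nat set \<Rightarrow> nat \<Rightarrow> nat set \<Rightarrow> int" where
  "L_fund S n T = (if S \<subseteq> T \<and> T \<subseteq> {1..<n} then 1 else 0)"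

fun Uapp :: "(nat \<Rightarrow> 'b \<Rightarrow> 'b) \<Rightarrow> nat list \<Rightarrow> 'b \<Rightarrow> 'b" where
  "Uapp U [] m = m"
| "Uapp U (i # w) m = U i (Uapp U w m)"

fun restless :: "(nat \<Rightarrow> 'b \<Rightarrow> 'b) \<Rightarrow> nat list \<Rightarrow> 'b \<Rightarrow> bool" where
  "restless U [] m = True"
| "restless U (i # w) m = (restless U w m \<and> U i (Uapp U w m) \<noteq> Uapp U w m)"

text \<open>Character of the module C M(P) with T_i = -U_i, evaluated at T_{i1}...T_{ir}:
  the trace of (-1)^r U_{i1}...U_{ir} on the basis M(P).\<close>
definition char_P :: "'a::order itself \<Rightarrow> (nat \<Rightarrow> 'a list \<Rightarrow> 'a list) \<Rightarrow> nat list \<Rightarrow> int" where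
  "char_P tp U w = (-1) ^ length w * int (card {m \<in> mchains tp. Uapp U w m = m})"

text \<open>One-dimensional character chi_S: T_i \<mapsto> -1 for i \<in> S, T_i \<mapsto> 0 otherwise.\<close>
definition chi :: "nat set \<Rightarrow> nat list \<Rightarrow> int" where
  "chi S w = (if set w \<subseteq> S then (-1) ^ length w else 0)"

definition good_action :: "'a::{order,finite} itself \<Rightarrow> nat \<Rightarrow> (nat \<Rightarrow> 'a list \<Rightarrow> 'a list) \<Rightarrow> bool" where
  "good_action tp n U \<longleftrightarrow>
     (\<forall>i\<in>{1..<n}. \<forall>m\<in>mchains tp. U i m \<in> mchains tp) \<and>
     (\<forall>i\<in>{1..<n}. \<forall>m\<in>mchains tp. \<forall>j<length m. j \<noteq> i \<longrightarrow> U i m ! j = m ! j) \<and>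
     (\<forall>i\<in>{1..<n}. \<forall>m\<in>mchains tp. U i (U i m) = U i m) \<and>
     (\<forall>i\<in>{1..<n}. \<forall>j\<in>{1..<n}. \<forall>m\<in>mchains tp.
        (i \<ge> j + 2 \<or> j \<ge> i + 2) \<longrightarrow> U i (U j m) = U j (U i m)) \<and>
     (\<forall>i. 1 \<le> i \<and> i + 1 < n \<longrightarrow> (\<forall>m\<in>mchains tp.
        U i (U (i+1) (U i m)) = U (i+1) (U i (U (i+1) m)))) \<and>
     \<comment> \<open>omega F_P = ch(chi_P): writing F_P = sum_S b_S L_S and chi_P = sum_S c_S chi_S,
        omega F_P = sum_S b_S L_{[n-1]-S} and ch(chi_P) = sum_S c_S L_S\<close>
     (\<exists>b c :: nat set \<Rightarrow> int.
        (\<forall>T. F_P tp n T = (\<Sum>S\<in>Pow {1..<n}. b S * L_fund S n T)) \<and>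
        (\<forall>w. set w \<subseteq> {1..<n} \<longrightarrow> char_P tp U w = (\<Sum>S\<in>Pow {1..<n}. c S * chi S w)) \<and>
        (\<forall>T. (\<Sum>S\<in>Pow {1..<n}. b S * L_fund ({1..<n} - S) n T)
            = (\<Sum>S\<in>Pow {1..<n}. c S * L_fund S n T)))"

text \<open>s_i = (i i+1); products compose right to left\<close>
definition s :: "nat \<Rightarrow> nat \<Rightarrow> nat" where
  "s i = transpose i (i + 1)"

definition sprod :: "nat list \<Rightarrow> nat \<Rightarrow> nat" where
  "sprod w = foldr (\<lambda>i f. s i \<circ> f) w id"

definition inv_count :: "nat \<Rightarrow> (nat \<Rightarrow> nat) \<Rightarrow> nat" where
  "inv_count n \<sigma> = card {(i, j). 1 \<le> i \<and> i < j \<and> j \<le> n \<and> \<sigma> i > \<sigma> j}"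

definition reduced_expr :: "nat \<Rightarrow> nat list \<Rightarrow> (nat \<Rightarrow> nat) \<Rightarrow> bool" where
  "reduced_expr n w \<sigma> \<longleftrightarrow> set w \<subseteq> {1..<n} \<and> sprod w = \<sigma> \<and> length w = inv_count n \<sigma>"

definition has_descent :: "(nat \<Rightarrow> nat) \<Rightarrow> nat \<Rightarrow> bool" where
  "has_descent \<sigma> i \<longleftrightarrow> \<sigma> i > \<sigma> (i + 1)"

definition m0 :: "'a::order itself \<Rightarrow> nat \<Rightarrow> (nat \<Rightarrow> 'a list \<Rightarrow> 'a list) \<Rightarrow> 'a list" where
  "m0 tp n U = (THE m. m \<in> mchains tp \<and> (\<forall>i\<in>{1..<n}. U i m = m))"

definition omega_m :: "'a::order itself \<Rightarrow> nat \<Rightarrow> (nat \<Rightarrow> 'a list \<Rightarrow> 'a list) \<Rightarrow> 'a list \<Rightarrow> nat \<Rightarrow> nat" where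
  "omega_m tp n U m = (THE \<sigma>. \<exists>w. set w \<subseteq> {1..<n} \<and> restless U w m \<and>
       Uapp U w m = m0 tp n U \<and> \<sigma> = sprod w)"

end

theory Submission
  imports Defs
begin


lemma s_invol[simp]: "s i \<circ> s i = id"
  by (simp add: s_def)
lemma s_invol'[simp]: "s i (s i x) = x"
  by (simp add: s_def)

lemma sprod_Nil[simp]: "sprod [] = id" by (simp add: sprod_def)
lemma sprod_Cons[simp]: "sprod (i # w) = s i \<circ> sprod w" by (simp add: sprod_def)
lemma sprod_append: "sprod (v @ w) = sprod v \<circ> sprod w"
  by (induction v) (auto simp: sprod_def)
lemma sprod_snoc: "sprod (v @ [j]) = sprod v \<circ> s j"
  by (simp add: sprod_append)
lemma bij_s: "bij (s i)" by (simp add: s_def)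
lemma bij_sprod: "bij (sprod w)"
proof (induction w)
  case Nil then show ?case by (metis bij_id sprod_Nil)
next
  case (Cons i w) then show ?case using bij_comp[OF Cons.IH bij_s[of i]] sprod_Cons by metis
qed

definition Inv :: "nat \<Rightarrow> (nat \<Rightarrow> nat) \<Rightarrow> (nat \<times> nat) set" where
  "Inv n \<sigma> = {(i, j). 1 \<le> i \<and> i < j \<and> j \<le> n \<and> \<sigma> i > \<sigma> j}"

lemma inv_count_Inv: "inv_count n \<sigma> = card (Inv n \<sigma>)"
  by (simp add: inv_count_def Inv_def)

lemma finite_Inv: "finite (Inv n \<sigma>)"
  by (rule finite_subset[of _ "{1..n} \<times> {1..n}"]) (auto simp: Inv_def)

lemma Inv_map:
  assumes "1 \<le> i" "i < n"
  shows "(\<lambda>(a,b). (s i a, s i b)) ` (Inv n (\<sigma> \<circ> s i) - {(i, i+1)}) \<subseteq> Inv n \<sigma> - {(i, i+1)}"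
proof
  fix x assume "x \<in> (\<lambda>(a,b). (s i a, s i b)) ` (Inv n (\<sigma> \<circ> s i) - {(i, i+1)})"
  then obtain a b where x: "x = (s i a, s i b)" and ab: "(a,b) \<in> Inv n (\<sigma> \<circ> s i)" "(a,b) \<noteq> (i,i+1)"
    by auto
  show "x \<in> Inv n \<sigma> - {(i, i+1)}"
    using ab assms unfolding x Inv_def s_def transpose_def by (auto split: if_splits)
qed

lemma card_minus_plus: "finite A \<Longrightarrow> card A = card (A - {p}) + (if p \<in> A then 1 else 0)"
proof (cases "p \<in> A")
  case True
  assume f: "finite A"
  then have "card A > 0" using True card_gt_0_iff by blast
  then show ?thesis using True f by (simp add: card_Diff_singleton)
qed simp

lemma inv_count_step:
  assumes "1 \<le> i" "i < n"
  shows "inv_count n (\<sigma> \<circ> s i) + (if \<sigma> i > \<sigma> (i+1) then 1 else 0)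
       = inv_count n \<sigma> + (if \<sigma> (i+1) > \<sigma> i then 1 else 0)"
proof -
  let ?f = "\<lambda>(a::nat,b::nat). (s i a, s i b)"
  let ?p = "(i, i+1)"
  have 1: "?f ` (Inv n (\<sigma> \<circ> s i) - {?p}) \<subseteq> Inv n \<sigma> - {?p}"
    by (rule Inv_map[OF assms])
  have 2: "?f ` (Inv n \<sigma> - {?p}) \<subseteq> Inv n (\<sigma> \<circ> s i) - {?p}"
    using Inv_map[OF assms, of "\<sigma> \<circ> s i"] by (simp add: comp_assoc)
  have ff: "\<And>x. ?f (?f x) = x" by auto
  have bij: "bij_betw ?f (Inv n (\<sigma> \<circ> s i) - {?p}) (Inv n \<sigma> - {?p})"
    apply (rule bij_betw_byWitness[where f'="?f"])
    using 1 2 ff by auto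
  have c: "card (Inv n (\<sigma> \<circ> s i) - {?p}) = card (Inv n \<sigma> - {?p})"
    using bij_betw_same_card[OF bij] .
  have p1: "?p \<in> Inv n (\<sigma> \<circ> s i) \<longleftrightarrow> \<sigma> (i+1) > \<sigma> i"
    using assms by (auto simp: Inv_def s_def)
  have p2: "?p \<in> Inv n \<sigma> \<longleftrightarrow> \<sigma> i > \<sigma> (i+1)"
    using assms by (auto simp: Inv_def)
  note e = card_minus_plus[where p="?p"]
  show ?thesis
    unfolding inv_count_Inv
    using e[OF finite_Inv, of n "\<sigma> \<circ> s i"] e[OF finite_Inv, of n \<sigma>] c p1 p2
    by (auto split: if_splits)
qed

lemma inv_count_id[simp]: "inv_count n id = 0"
  unfolding inv_count_def by (auto simp: card_eq_0_iff)
lemma inv_count_id'[simp]: "inv_count n (\<lambda>x. x) = 0"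
  unfolding inv_count_def by (auto simp: card_eq_0_iff)

lemma inv_count_desc:
  assumes "1 \<le> i" "i < n" "\<sigma> i > \<sigma> (i+1)"
  shows "inv_count n (\<sigma> \<circ> s i) + 1 = inv_count n \<sigma>"
  using inv_count_step[OF assms(1,2), of \<sigma>] assms(3) by auto

lemma inv_count_asc:
  assumes "1 \<le> i" "i < n" "\<sigma> i < \<sigma> (i+1)"
  shows "inv_count n (\<sigma> \<circ> s i) = inv_count n \<sigma> + 1"
  using inv_count_step[OF assms(1,2), of \<sigma>] assms(3) by auto

lemma inv_count_sprod_le: "set w \<subseteq> {1..<n} \<Longrightarrow> inv_count n (sprod w) \<le> length w"
proof (induction w rule: rev_induct)
  case Nil then show ?case by simp
next
  case (snoc j v)
  have j: "1 \<le> j" "j < n" using snoc.prems by auto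
  have inj: "inj (sprod v)" using bij_sprod bij_is_inj by blast
  have "sprod v j \<noteq> sprod v (j+1)" using inj injD by fastforce
  then have "inv_count n (sprod v \<circ> s j) \<le> inv_count n (sprod v) + 1"
    using inv_count_step[OF j, of "sprod v"] by (auto split: if_splits)
  moreover have "inv_count n (sprod (v@[j])) = inv_count n (sprod v \<circ> s j)" by (simp only: sprod_snoc)
  moreover have "inv_count n (sprod v) \<le> length v" using snoc by auto
  ultimately show ?case by simp
qed



lemma Uapp_append: "Uapp U (v @ w) m = Uapp U v (Uapp U w m)"
  by (induction v) auto

lemma restless_append: "restless U (v @ w) m \<longleftrightarrow> restless U w m \<and> restless U v (Uapp U w m)"
  by (induction v) (auto simp: Uapp_append)

lemma s_comm: "i + 2 \<le> j \<or> j + 2 \<le> i \<Longrightarrow> s i \<circ> s j = s j \<circ> s i"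
  by (auto simp: s_def transpose_def fun_eq_iff)

lemma s_braid: "s i \<circ> s (i+1) \<circ> s i = s (i+1) \<circ> s i \<circ> s (i+1)"
  by (auto simp: s_def transpose_def fun_eq_iff)

locale hsys =
  fixes M :: "'b list set" and n :: nat and U :: "nat \<Rightarrow> 'b list \<Rightarrow> 'b list" and z :: "'b list"
  assumes closed: "i \<in> {1..<n} \<Longrightarrow> m \<in> M \<Longrightarrow> U i m \<in> M"
  and len: "m \<in> M \<Longrightarrow> length m = Suc n"
  and loc: "i \<in> {1..<n} \<Longrightarrow> m \<in> M \<Longrightarrow> k < length m \<Longrightarrow> k \<noteq> i \<Longrightarrow> U i m ! k = m ! k"
  and idem: "i \<in> {1..<n} \<Longrightarrow> m \<in> M \<Longrightarrow> U i (U i m) = U i m"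
  and comm: "i \<in> {1..<n} \<Longrightarrow> j \<in> {1..<n} \<Longrightarrow> m \<in> M \<Longrightarrow> (i \<ge> j+2 \<or> j \<ge> i+2) \<Longrightarrow> U i (U j m) = U j (U i m)"
  and braid: "1 \<le> i \<Longrightarrow> i+1 < n \<Longrightarrow> m \<in> M \<Longrightarrow> U i (U (i+1) (U i m)) = U (i+1) (U i (U (i+1) m))"
  and nobow: "1 \<le> i \<Longrightarrow> i+1 < n \<Longrightarrow> x1 \<in> M \<Longrightarrow> x2 \<in> M \<Longrightarrow> x3 \<in> M \<Longrightarrow> x4 \<in> M \<Longrightarrow>
     x1!i = x2!i \<Longrightarrow> x3!i = x4!i \<Longrightarrow> x1!(i+1) = x3!(i+1) \<Longrightarrow> x2!(i+1) = x4!(i+1) \<Longrightarrow>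
     x1!i \<noteq> x3!i \<Longrightarrow> x1!(i+1) \<noteq> x2!(i+1) \<Longrightarrow> False"
  and sink_in: "z \<in> M"
  and sink_fix: "i \<in> {1..<n} \<Longrightarrow> U i z = z"
  and sink_uniq: "m \<in> M \<Longrightarrow> \<forall>i\<in>{1..<n}. U i m = m \<Longrightarrow> m = z"
  and acyc: "m \<in> M \<Longrightarrow> w \<noteq> [] \<Longrightarrow> set w \<subseteq> {1..<n} \<Longrightarrow> restless U w m \<Longrightarrow> Uapp U w m \<noteq> m"
  and finM: "finite M"
begin

lemma move_diff:
  assumes "i \<in> {1..<n}" "m \<in> M" "U i m \<noteq> m"
  shows "U i m ! i \<noteq> m ! i"
proof
  assume h: "U i m ! i = m ! i"
  have L: "length (U i m) = length m" using len[OF closed[OF assms(1,2)]] len[OF assms(2)] by simp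
  have "U i m = m"
  proof (rule nth_equalityI)
    show "length (U i m) = length m" by (rule L)
    fix k assume "k < length (U i m)"
    then show "U i m ! k = m ! k" using loc[OF assms(1,2)] h L by (cases "k = i") auto
  qed
  then show False using assms(3) by simp
qed

lemma hex:
  assumes i: "1 \<le> i" "i+1 < n" and m: "m \<in> M" and mi: "U i m \<noteq> m" and mj: "U (i+1) m \<noteq> m"
  shows "U (i+1) (U i m) \<noteq> U i m \<and> U i (U (i+1) (U i m)) \<noteq> U (i+1) (U i m)
       \<and> U i (U (i+1) m) \<noteq> U (i+1) m \<and> U (i+1) (U i (U (i+1) m)) \<noteq> U i (U (i+1) m)"
proof -
  define j where "j = i+1"
  have iN: "i \<in> {1..<n}" and jN: "j \<in> {1..<n}" using i by (auto simp: j_def)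
  define a where "a = U i m"
  define a1 where "a1 = U j a"
  define zz where "zz = U i a1"
  define b where "b = U j m"
  define b1 where "b1 = U i b"
  define z2 where "z2 = U j b1"
  have M: "a \<in> M" "a1 \<in> M" "zz \<in> M" "b \<in> M" "b1 \<in> M" "z2 \<in> M"
    using closed iN jN m by (auto simp: a_def a1_def zz_def b_def b1_def z2_def)
  have ij: "i \<noteq> j" "j \<noteq> i" "i < Suc n" "j < Suc n" using i by (auto simp: j_def)
  have Pj: "\<And>x. x \<in> M \<Longrightarrow> U j x ! i = x ! i" using loc[OF jN] len ij by auto
  have Qi: "\<And>x. x \<in> M \<Longrightarrow> U i x ! j = x ! j" using loc[OF iN] len ij by auto
  have zeq: "zz = z2" unfolding zz_def a1_def a_def z2_def b1_def b_def j_def using braid[OF i m] .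
  have Pa: "a ! i \<noteq> m ! i" using move_diff[OF iN m mi] by (simp add: a_def)
  have Qb: "b ! j \<noteq> m ! j" using move_diff[OF jN m] mj by (simp add: b_def j_def)
  have no: "\<And>y. y \<in> M \<Longrightarrow> y ! i = a ! i \<Longrightarrow> y ! j = b ! j \<Longrightarrow> False"
  proof -
    fix y assume y: "y \<in> M" "y ! i = a ! i" "y ! j = b ! j"
    show False
      apply (rule nobow[OF i m M(4) M(1) y(1)])
      using y Pa Qb Pj[OF m] Qi[OF m] by (auto simp: a_def b_def j_def)
  qed
  have idA: "U i a = a" using idem[OF iN m] by (simp add: a_def)
  have c1: "a1 \<noteq> a"
  proof
    assume h: "a1 = a"
    then have "zz = a" using idA by (simp add: zz_def)
    then have "b1 ! i = a ! i" using zeq Pj[OF M(5)] by (simp add: z2_def)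
    moreover have "b1 ! j = b ! j" using Qi[OF M(4)] by (simp add: b1_def)
    ultimately show False using no M by blast
  qed
  have idB: "U j b = b" using idem[OF jN m] by (simp add: b_def)
  have c2: "b1 \<noteq> b"
  proof
    assume h: "b1 = b"
    then have "z2 = b" using idB by (simp add: z2_def)
    then have "a1 ! j = b ! j" using zeq Qi[OF M(2)] by (simp add: zz_def)
    moreover have "a1 ! i = a ! i" using Pj[OF M(1)] by (simp add: a1_def)
    ultimately show False using no M by blast
  qed
  have c3: "zz \<noteq> a1"
  proof
    assume h: "zz = a1"
    have "b1 ! i = a ! i" using Pj[OF M(5)] Pj[OF M(1)] zeq h by (simp add: z2_def a1_def)
    moreover have "b1 ! j = b ! j" using Qi[OF M(4)] by (simp add: b1_def)
    ultimately show False using no M by blast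
  qed
  have c4: "z2 \<noteq> b1"
  proof
    assume h: "z2 = b1"
    have "a1 ! j = b ! j" using Qi[OF M(2)] Qi[OF M(4)] zeq h by (simp add: zz_def b1_def)
    moreover have "a1 ! i = a ! i" using Pj[OF M(1)] by (simp add: a1_def)
    ultimately show False using no M by blast
  qed
  show ?thesis using c1 c2 c3 c4 by (simp add: a_def a1_def zz_def b_def b1_def z2_def j_def)
qed

end


context hsys begin

definition path where "path m w \<longleftrightarrow> set w \<subseteq> {1..<n} \<and> restless U w m \<and> Uapp U w m = z"

definition R where "R = {(U i m, m) | i m. i \<in> {1..<n} \<and> m \<in> M \<and> U i m \<noteq> m}"

definition Good where "Good m \<longleftrightarrow> (\<exists>w. path m w) \<and> (\<forall>w w'. path m w \<longrightarrow> path m w' \<longrightarrow> sprod w = sprod w')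
   \<and> (\<forall>w. path m w \<longrightarrow> length w = inv_count n (sprod w))
   \<and> (\<forall>w. path m w \<longrightarrow> (\<forall>k\<in>{1..<n}. U k m \<noteq> m \<longleftrightarrow> sprod w (k+1) < sprod w k))"

definition sg where "sg m = sprod (SOME w. path m w)"

lemma Uapp_in: "set w \<subseteq> {1..<n} \<Longrightarrow> m \<in> M \<Longrightarrow> Uapp U w m \<in> M"
  by (induction w) (auto intro: closed)

lemma path_snoc: "path m (v @ [j]) \<longleftrightarrow> j \<in> {1..<n} \<and> U j m \<noteq> m \<and> path (U j m) v"
  unfolding path_def by (auto simp: restless_append Uapp_append)

lemma path_Nil: "path m [] \<longleftrightarrow> m = z"
  unfolding path_def by auto

lemma path_z: "path z w \<Longrightarrow> w = []"
  by (cases w rule: rev_exhaust) (auto simp: path_snoc sink_fix)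

lemma R_trancl: "(x, y) \<in> R\<^sup>+ \<Longrightarrow> y \<in> M \<and> (\<exists>w. w \<noteq> [] \<and> set w \<subseteq> {1..<n} \<and> restless U w y \<and> Uapp U w y = x)"
proof (induction rule: trancl_induct)
  case (base y)
  then obtain i where "x = U i y" "i \<in> {1..<n}" "y \<in> M" "U i y \<noteq> y" unfolding R_def by auto
  then show ?case by (intro conjI exI[of _ "[i]"]) auto
next
  case (step y y')
  then obtain i where i: "y = U i y'" "i \<in> {1..<n}" "y' \<in> M" "U i y' \<noteq> y'" unfolding R_def by auto
  from step obtain w where w: "w \<noteq> []" "set w \<subseteq> {1..<n}" "restless U w y" "Uapp U w y = x" by auto
  show ?case
    by (intro conjI exI[of _ "w @ [i]"]) (use i w in \<open>auto simp: restless_append Uapp_append\<close>)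
qed

lemma wfR: "wf R"
proof -
  have fin: "finite R"
    by (rule finite_subset[of _ "M \<times> M"]) (auto simp: R_def finM closed)
  have "acyclic R"
    unfolding acyclic_def
  proof
    fix x show "(x, x) \<notin> R\<^sup>+"
    proof
      assume "(x, x) \<in> R\<^sup>+"
      from R_trancl[OF this] acyc show False by blast
    qed
  qed
  then show ?thesis using wf_iff_acyclic_if_finite[OF fin] by simp
qed

lemma inR: "i \<in> {1..<n} \<Longrightarrow> m \<in> M \<Longrightarrow> U i m \<noteq> m \<Longrightarrow> (U i m, m) \<in> R"
  unfolding R_def by blast

lemma good_sg: "Good y \<Longrightarrow> path y w \<Longrightarrow> sprod w = sg y"
  unfolding Good_def sg_def by (metis someI_ex)

lemma good_ex: "Good y \<Longrightarrow> \<exists>w. path y w"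
  unfolding Good_def by blast

lemma good_desc: "Good y \<Longrightarrow> k \<in> {1..<n} \<Longrightarrow> U k y \<noteq> y \<longleftrightarrow> sg y (k+1) < sg y k"
  unfolding Good_def sg_def by (metis someI_ex)

lemma sg_inj: "Good y \<Longrightarrow> inj (sg y)"
  using good_ex good_sg bij_sprod bij_is_inj by metis

lemma good_asc: "Good y \<Longrightarrow> k \<in> {1..<n} \<Longrightarrow> U k y = y \<Longrightarrow> sg y k < sg y (k+1)"
proof -
  assume g: "Good y" and k: "k \<in> {1..<n}" and f: "U k y = y"
  have "\<not> sg y (k+1) < sg y k" using good_desc[OF g k] f by simp
  moreover have "sg y k \<noteq> sg y (k+1)" using sg_inj[OF g] injD by fastforce
  ultimately show ?thesis by simp
qed

lemma good_len: "Good y \<Longrightarrow> path y w \<Longrightarrow> length w = inv_count n (sg y)"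
  unfolding Good_def sg_def by (metis someI_ex)

lemma good_step: "Good x \<Longrightarrow> j \<in> {1..<n} \<Longrightarrow> U j y = x \<Longrightarrow> x \<noteq> y \<Longrightarrow> \<exists>w. path y w \<and> sprod w = sg x \<circ> s j"
proof -
  assume g: "Good x" and j: "j \<in> {1..<n}" and e: "U j y = x" "x \<noteq> y"
  obtain v where v: "path x v" using good_ex[OF g] by blast
  have "path y (v @ [j])" using v j e by (simp add: path_snoc)
  moreover have "sprod (v @ [j]) = sg x \<circ> s j" using good_sg[OF g v] by (simp add: sprod_snoc)
  ultimately show ?thesis by blast
qed

end


context hsys begin

lemma far_moves:
  assumes i: "i \<in> {1..<n}" and j: "j \<in> {1..<n}" and far: "i \<ge> j+2 \<or> j \<ge> i+2"
    and m: "m \<in> M" and mi: "U i m \<noteq> m" and mj: "U j m \<noteq> m"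
  shows "U j (U i m) \<noteq> U i m"
proof
  assume h: "U j (U i m) = U i m"
  have ij: "i \<noteq> j" "j < length m" "j < length (U j m)" using far j len m closed[OF j m] by auto
  have "U i m ! j = m ! j" using loc[OF i m] ij by auto
  moreover have "U i (U j m) ! j = U j m ! j" using loc[OF i closed[OF j m]] ij by auto
  moreover have "U i (U j m) = U i m" using comm[OF i j m far] h by simp
  ultimately have "U j m ! j = m ! j" by simp
  then show False using move_diff[OF j m mj] by simp
qed

lemma all_good: "m \<in> M \<Longrightarrow> Good m"
proof (induction m rule: wf_induct_rule[OF wf_trancl[OF wfR]])
  case (1 m)
  note mM = 1(2)
  have IH: "\<And>y. (y, m) \<in> R\<^sup>+ \<Longrightarrow> Good y"
  proof -
    fix y assume y: "(y, m) \<in> R\<^sup>+"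
    then obtain w where "set w \<subseteq> {1..<n}" "Uapp U w m = y" using R_trancl by blast
    then have "y \<in> M" using Uapp_in mM by blast
    then show "Good y" using 1(1) y by blast
  qed
  have R1: "\<And>i x. i \<in> {1..<n} \<Longrightarrow> x \<in> M \<Longrightarrow> U i x \<noteq> x \<Longrightarrow> (U i x, x) \<in> R\<^sup>+"
    using inR by blast
  show "Good m"
  proof (cases "\<forall>i\<in>{1..<n}. U i m = m")
    case True
    then have mz: "m = z" using sink_uniq mM by blast
    have pz: "\<And>w. path m w \<longleftrightarrow> w = []" using path_z path_Nil mz by blast
    show ?thesis unfolding Good_def pz using True by auto
  next
    case False
    then obtain i where iN: "i \<in> {1..<n}" and mi: "U i m \<noteq> m" by blast
    define a where "a = U i m"
    have aM: "a \<in> M" using closed iN mM a_def by blast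
    have Ra: "(a, m) \<in> R\<^sup>+" using R1[OF iN mM mi] a_def by simp
    have ga: "Good a" using IH Ra by blast
    have gmove: "\<And>j. j \<in> {1..<n} \<Longrightarrow> U j m \<noteq> m \<Longrightarrow> Good (U j m)"
      using IH R1 mM by blast
    have far: "\<And>i j. i \<in> {1..<n} \<Longrightarrow> j \<in> {1..<n} \<Longrightarrow> i \<ge> j+2 \<or> j \<ge> i+2 \<Longrightarrow> U i m \<noteq> m \<Longrightarrow> U j m \<noteq> m
        \<Longrightarrow> sg (U i m) \<circ> s i = sg (U j m) \<circ> s j"
    proof -
      fix i j assume i: "i \<in> {1..<n}" and j: "j \<in> {1..<n}" and fr: "i \<ge> j+2 \<or> j \<ge> i+2"
        and mi: "U i m \<noteq> m" and mj: "U j m \<noteq> m"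
      define c where "c = U j (U i m)"
      have c2: "c = U i (U j m)" using comm[OF i j mM fr] c_def by simp
      have n1: "U j (U i m) \<noteq> U i m" using far_moves[OF i j fr mM mi mj] .
      have n2: "U i (U j m) \<noteq> U j m" using far_moves[OF j i _ mM mj mi] fr by auto
      have Rc: "(c, m) \<in> R\<^sup>+" using R1[OF i mM mi] R1[OF j closed[OF i mM] n1] c_def by auto
      have gc: "Good c" using IH Rc by blast
      obtain w1 where w1: "path (U i m) w1" "sprod w1 = sg c \<circ> s j"
        using good_step[OF gc j c_def[symmetric]] n1 c_def by auto
      obtain w2 where w2: "path (U j m) w2" "sprod w2 = sg c \<circ> s i"
        using good_step[OF gc i c2[symmetric]] n2 c2 by auto
      have "sg (U i m) = sg c \<circ> s j" using good_sg[OF gmove[OF i mi] w1(1)] w1(2) by simp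
      moreover have "sg (U j m) = sg c \<circ> s i" using good_sg[OF gmove[OF j mj] w2(1)] w2(2) by simp
      moreover have "s i \<circ> s j = s j \<circ> s i" using s_comm[of i j] fr by auto
      ultimately show "sg (U i m) \<circ> s i = sg (U j m) \<circ> s j"
        by (simp add: comp_assoc)
    qed
    have adj: "\<And>i. i \<in> {1..<n} \<Longrightarrow> i+1 \<in> {1..<n} \<Longrightarrow> U i m \<noteq> m \<Longrightarrow> U (i+1) m \<noteq> m
        \<Longrightarrow> sg (U i m) \<circ> s i = sg (U (i+1) m) \<circ> s (i+1)"
    proof -
      fix i assume i: "i \<in> {1..<n}" and j: "i+1 \<in> {1..<n}" and mi: "U i m \<noteq> m" and mj: "U (i+1) m \<noteq> m"
      have i1: "1 \<le> i" "i + 1 < n" using i j by auto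
      note h = hex[OF i1 mM mi mj]
      define a1 where "a1 = U (i+1) (U i m)"
      define b1 where "b1 = U i (U (i+1) m)"
      define zz where "zz = U i a1"
      have zz2: "zz = U (i+1) b1" using braid[OF i1 mM] by (simp add: zz_def a1_def b1_def)
      have a1M: "a1 \<in> M" and b1M: "b1 \<in> M" using closed i j mM by (auto simp: a1_def b1_def)
      have Ra1: "(a1, m) \<in> R\<^sup>+" using R1[OF i mM mi] R1[OF j closed[OF i mM]] h a1_def
        by (meson trancl_trans)
      have Rb1: "(b1, m) \<in> R\<^sup>+" using R1[OF j mM mj] R1[OF i closed[OF j mM]] h b1_def
        by (meson trancl_trans)
      have Rz: "(zz, m) \<in> R\<^sup>+" using Ra1 R1[OF i a1M] h zz_def a1_def
        by (meson trancl_trans)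
      have gz: "Good zz" "Good a1" "Good b1" using IH Rz Ra1 Rb1 by auto
      obtain v1 where v1: "path a1 v1" "sprod v1 = sg zz \<circ> s i"
        using good_step[OF gz(1) i zz_def[symmetric]] h zz_def a1_def by auto
      have sa1: "sg a1 = sg zz \<circ> s i" using good_sg[OF gz(2) v1(1)] v1(2) by simp
      obtain v2 where v2: "path (U i m) v2" "sprod v2 = sg a1 \<circ> s (i+1)"
        using good_step[OF gz(2) j a1_def[symmetric]] h a1_def by auto
      have sa: "sg (U i m) = sg zz \<circ> s i \<circ> s (i+1)"
        using good_sg[OF gmove[OF i mi] v2(1)] v2(2) sa1 by simp
      obtain v3 where v3: "path b1 v3" "sprod v3 = sg zz \<circ> s (i+1)"
        using good_step[OF gz(1) j zz2[symmetric]] h zz2 b1_def by auto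
      have sb1: "sg b1 = sg zz \<circ> s (i+1)" using good_sg[OF gz(3) v3(1)] v3(2) by simp
      obtain v4 where v4: "path (U (i+1) m) v4" "sprod v4 = sg b1 \<circ> s i"
        using good_step[OF gz(3) i b1_def[symmetric]] h b1_def by auto
      have sb: "sg (U (i+1) m) = sg zz \<circ> s (i+1) \<circ> s i"
        using good_sg[OF gmove[OF j mj] v4(1)] v4(2) sb1 by simp
      show "sg (U i m) \<circ> s i = sg (U (i+1) m) \<circ> s (i+1)"
        using sa sb s_braid[of i] by (simp add: comp_assoc)
    qed
    have conf: "\<And>j. j \<in> {1..<n} \<Longrightarrow> U j m \<noteq> m \<Longrightarrow> sg (U j m) \<circ> s j = sg a \<circ> s i"
    proof -
      fix j assume j: "j \<in> {1..<n}" and mj: "U j m \<noteq> m"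
      consider "j = i" | "i \<ge> j+2 \<or> j \<ge> i+2" | "j = i+1" | "i = j+1" by linarith
      then show "sg (U j m) \<circ> s j = sg a \<circ> s i"
      proof cases
        case 1 then show ?thesis by (simp add: a_def)
      next
        case 2 then show ?thesis using far[OF j iN _ mj mi] by (auto simp: a_def)
      next
        case 3 then show ?thesis using adj[OF iN _ mi] j mj by (auto simp: a_def)
      next
        case 4 then show ?thesis using adj[OF j _ mj] iN mi by (auto simp: a_def)
      qed
    qed
    have K: "\<And>w. path m w \<Longrightarrow> sprod w = sg a \<circ> s i \<and> (\<exists>v j. w = v @ [j] \<and> j \<in> {1..<n} \<and> U j m \<noteq> m \<and> path (U j m) v)"
    proof -
      fix w assume pw: "path m w"
      show "sprod w = sg a \<circ> s i \<and> (\<exists>v j. w = v @ [j] \<and> j \<in> {1..<n} \<and> U j m \<noteq> m \<and> path (U j m) v)"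
      proof (cases w rule: rev_exhaust)
        case Nil
        then have "m = z" using pw path_Nil by simp
        then show ?thesis using sink_fix[OF iN] mi by simp
      next
        case (snoc v j)
        then have j: "j \<in> {1..<n}" "U j m \<noteq> m" "path (U j m) v" using pw path_snoc by auto
        have "sprod v = sg (U j m)" using good_sg[OF gmove[OF j(1,2)] j(3)] .
        then have "sprod w = sg (U j m) \<circ> s j" using snoc by (simp add: sprod_snoc)
        then show ?thesis using conf[OF j(1,2)] snoc j by auto
      qed
    qed
    obtain wa where wa: "path a wa" using good_ex[OF ga] by blast
    have ex: "path m (wa @ [i])" using wa iN mi by (simp add: path_snoc a_def)
    define \<sigma> where "\<sigma> = sg a \<circ> s i"
    have injs: "inj \<sigma>" using bij_sprod[of "wa @ [i]"] good_sg[OF ga wa] bij_is_inj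
      by (metis \<sigma>_def sprod_snoc)
    have lenK: "\<And>w. path m w \<Longrightarrow> length w = inv_count n \<sigma>"
    proof -
      fix w assume pw: "path m w"
      obtain v j where vj: "w = v @ [j]" "j \<in> {1..<n}" "U j m \<noteq> m" "path (U j m) v"
        using K[OF pw] by blast
      have gb: "Good (U j m)" using gmove vj by blast
      have lv: "length v = inv_count n (sg (U j m))" using good_len[OF gb vj(4)] .
      have asc: "sg (U j m) j < sg (U j m) (j+1)"
        using good_asc[OF gb vj(2)] idem[OF vj(2) mM] by simp
      have "inv_count n (sg (U j m) \<circ> s j) = inv_count n (sg (U j m)) + 1"
        using inv_count_asc[OF _ _ asc] vj(2) by auto
      moreover have "sg (U j m) \<circ> s j = \<sigma>"
        using K[OF pw] good_sg[OF gb vj(4)] vj(1) by (simp add: sprod_snoc \<sigma>_def)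
      ultimately show "length w = inv_count n \<sigma>" using lv vj(1) by simp
    qed
    have descK: "\<And>k. k \<in> {1..<n} \<Longrightarrow> U k m \<noteq> m \<longleftrightarrow> \<sigma> (k+1) < \<sigma> k"
    proof -
      fix k assume k: "k \<in> {1..<n}"
      show "U k m \<noteq> m \<longleftrightarrow> \<sigma> (k+1) < \<sigma> k"
      proof
        assume mk: "U k m \<noteq> m"
        have gb: "Good (U k m)" using gmove k mk by blast
        have asc: "sg (U k m) k < sg (U k m) (k+1)"
          using good_asc[OF gb k] idem[OF k mM] by simp
        have "sg (U k m) \<circ> s k = \<sigma>" using conf[OF k mk] \<sigma>_def by simp
        then have "\<sigma> (k+1) = sg (U k m) k" "\<sigma> k = sg (U k m) (k+1)"
          by (auto simp: s_def fun_eq_iff dest: spec[of _ k] spec[of _ "k+1"])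
        then show "\<sigma> (k+1) < \<sigma> k" using asc by simp
      next
        assume desc: "\<sigma> (k+1) < \<sigma> k"
        show "U k m \<noteq> m"
        proof
          assume mk: "U k m = m"
          have ki: "k \<noteq> i" using mk mi by auto
          consider "i \<ge> k+2 \<or> k \<ge> i+2" | "k = i+1" | "i = k+1" using ki by linarith
          then show False
          proof cases
            case 1
            have "U k a = a" using comm[OF k iN mM] 1 mk a_def by auto
            then have "sg a k < sg a (k+1)" using good_asc[OF ga k] by simp
            moreover have "\<sigma> k = sg a k" "\<sigma> (k+1) = sg a (k+1)" using 1
              by (auto simp: \<sigma>_def s_def transpose_def)
            ultimately show False using desc by simp
          next
            case 2
            have i1: "1 \<le> i" "i+1 < n" using 2 k iN by auto
            define x where "x = U k a"
            have xfix: "U i x = x" using braid[OF i1 mM] mk 2 by (simp add: x_def a_def)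
            show False
            proof (cases "x = a")
              case True
              have "sg a i < sg a (i+1)" using good_asc[OF ga iN] idem[OF iN mM] a_def by simp
              moreover have "sg a (i+1) < sg a (i+2)" using good_asc[OF ga k] True x_def 2 by simp
              moreover have "\<sigma> (i+1) = sg a i" "\<sigma> (i+2) = sg a (i+2)"
                by (auto simp: \<sigma>_def s_def transpose_def)
              ultimately show False using desc 2 by simp
            next
              case False
              have Rx: "(x, m) \<in> R\<^sup>+" using R1[OF k aM] False x_def Ra by (meson trancl_trans)
              have gx: "Good x" using IH Rx by blast
              obtain v where v: "path a v" "sprod v = sg x \<circ> s k"
                using good_step[OF gx k x_def[symmetric]] False by auto
              have sa: "sg a = sg x \<circ> s k" using good_sg[OF ga v(1)] v(2) by simp
              have "sg x i < sg x (i+1)" using good_asc[OF gx iN xfix] .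
              moreover have "\<sigma> (k+1) = sg x (i+1)" "\<sigma> k = sg x i"
                using 2 by (auto simp: \<sigma>_def sa s_def transpose_def)
              ultimately show False using desc by simp
            qed
          next
            case 3
            have k1: "1 \<le> k" "k+1 < n" using 3 k iN by auto
            define x where "x = U k a"
            have xfix: "U i x = x" using braid[OF k1 mM] mk 3 by (simp add: x_def a_def)
            show False
            proof (cases "x = a")
              case True
              have "sg a i < sg a (i+1)" using good_asc[OF ga iN] idem[OF iN mM] a_def by simp
              moreover have "sg a k < sg a (k+1)" using good_asc[OF ga k] True x_def by simp
              moreover have "\<sigma> k = sg a k" "\<sigma> (k+1) = sg a (i+1)"
                using 3 by (auto simp: \<sigma>_def s_def transpose_def)
              ultimately show False using desc 3 by simp
            next
              case False
              have Rx: "(x, m) \<in> R\<^sup>+" using R1[OF k aM] False x_def Ra by (meson trancl_trans)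
              have gx: "Good x" using IH Rx by blast
              obtain v where v: "path a v" "sprod v = sg x \<circ> s k"
                using good_step[OF gx k x_def[symmetric]] False by auto
              have sa: "sg a = sg x \<circ> s k" using good_sg[OF ga v(1)] v(2) by simp
              have "sg x i < sg x (i+1)" using good_asc[OF gx iN xfix] .
              moreover have "\<sigma> k = sg x i" "\<sigma> (k+1) = sg x (i+1)"
                using 3 by (auto simp: \<sigma>_def sa s_def transpose_def)
              ultimately show False using desc by simp
            qed
          qed
        qed
      qed
    qed
    show ?thesis unfolding Good_def
      using ex K lenK descK \<sigma>_def by metis
  qed
qed

end


context hsys begin

lemma om_eq: "m \<in> M \<Longrightarrow> (THE \<sigma>. \<exists>w. set w \<subseteq> {1..<n} \<and> restless U w m \<and> Uapp U w m = z \<and> \<sigma> = sprod w) = sg m"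
proof -
  assume mM: "m \<in> M"
  have g: "Good m" using all_good mM .
  show ?thesis
  proof (rule the_equality)
    obtain w where "path m w" using good_ex[OF g] by blast
    then show "\<exists>w. set w \<subseteq> {1..<n} \<and> restless U w m \<and> Uapp U w m = z \<and> sg m = sprod w"
      using good_sg[OF g] unfolding path_def by metis
  next
    fix \<sigma> assume "\<exists>w. set w \<subseteq> {1..<n} \<and> restless U w m \<and> Uapp U w m = z \<and> \<sigma> = sprod w"
    then show "\<sigma> = sg m" using good_sg[OF g] unfolding path_def by metis
  qed
qed

lemma red_path: "m \<in> M \<Longrightarrow> set w \<subseteq> {1..<n} \<Longrightarrow> sprod w = sg m \<Longrightarrow> length w = inv_count n (sg m) \<Longrightarrow> path m w"
proof (induction w arbitrary: m rule: rev_induct)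
  case Nil
  have g: "Good m" using all_good Nil by blast
  have "m = z"
  proof (rule sink_uniq[OF Nil(1)], rule ballI, rule ccontr)
    fix i assume i: "i \<in> {1..<n}" "U i m \<noteq> m"
    then have "sg m (i+1) < sg m i" using good_desc[OF g] by blast
    then show False using Nil(3) by (metis sprod_Nil id_apply less_not_refl2 Suc_eq_plus1 lessI less_asym)
  qed
  then show ?case by (simp add: path_Nil)
next
  case (snoc j v)
  have g: "Good m" using all_good snoc by blast
  have j: "j \<in> {1..<n}" and vN: "set v \<subseteq> {1..<n}" using snoc by auto
  have e: "sg m = sprod v \<circ> s j" using snoc(4) sprod_snoc by metis
  have ev: "sprod v = sg m \<circ> s j" using e by (simp add: comp_assoc)
  have lev: "inv_count n (sprod v) \<le> length v" using inv_count_sprod_le[OF vN] .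
  have ne: "sg m j \<noteq> sg m (j+1)" using sg_inj[OF g] injD by fastforce
  have desc: "sg m (j+1) < sg m j"
  proof (rule ccontr)
    assume "\<not> sg m (j+1) < sg m j"
    then have "sg m j < sg m (j+1)" using ne by simp
    then have "inv_count n (sg m \<circ> s j) = inv_count n (sg m) + 1" using inv_count_asc j by auto
    then show False using lev ev snoc(5) by simp
  qed
  have mv: "U j m \<noteq> m" using good_desc[OF g j] desc by simp
  have bM: "U j m \<in> M" using closed j snoc by blast
  have gb: "Good (U j m)" using all_good bM by blast
  obtain u where u: "path m u" "sprod u = sg (U j m) \<circ> s j" using good_step[OF gb j refl] mv by auto
  have "sg m = sg (U j m) \<circ> s j" using good_sg[OF g u(1)] u(2) by simp
  then have sb: "sg (U j m) = sprod v" using ev by (simp add: comp_assoc)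
  have "inv_count n (sg m \<circ> s j) + 1 = inv_count n (sg m)" using inv_count_desc j desc by auto
  then have lb: "length v = inv_count n (sg (U j m))" using sb ev snoc(5) by simp
  have "path (U j m) v" using snoc.IH[OF bM vN sb[symmetric] lb] .
  then show ?case using j mv by (simp add: path_snoc)
qed

theorem final:
  assumes mM: "m \<in> M"
  shows "(\<forall>w. set w \<subseteq> {1..<n} \<longrightarrow>
            ((restless U w m \<and> Uapp U w m = z) \<longrightarrow> (set w \<subseteq> {1..<n} \<and> sprod w = sg m \<and> length w = inv_count n (sg m))) \<and>
            ((set w \<subseteq> {1..<n} \<and> sprod w = sg m \<and> length w = inv_count n (sg m)) \<longrightarrow> restless U w m \<and> Uapp U w m = z))
     \<and> (\<forall>i\<in>{1..<n}. (sg m i > sg m (i+1) \<longleftrightarrow> U i m \<noteq> m) \<and> (U i m \<noteq> m \<longrightarrow> sg (U i m) = sg m \<circ> s i))"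
proof -
  have g: "Good m" using all_good mM .
  have A: "\<And>w. set w \<subseteq> {1..<n} \<Longrightarrow> restless U w m \<Longrightarrow> Uapp U w m = z \<Longrightarrow> sprod w = sg m \<and> length w = inv_count n (sg m)"
    using good_sg[OF g] good_len[OF g] unfolding path_def by metis
  have B: "\<And>w. set w \<subseteq> {1..<n} \<Longrightarrow> sprod w = sg m \<Longrightarrow> length w = inv_count n (sg m) \<Longrightarrow> restless U w m \<and> Uapp U w m = z"
    using red_path[OF mM] unfolding path_def by blast
  have C: "\<And>i. i \<in> {1..<n} \<Longrightarrow> U i m \<noteq> m \<Longrightarrow> sg (U i m) = sg m \<circ> s i"
  proof -
    fix i assume i: "i \<in> {1..<n}" and mv: "U i m \<noteq> m"
    have gb: "Good (U i m)" using all_good closed[OF i mM] by blast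
    obtain u where u: "path m u" "sprod u = sg (U i m) \<circ> s i" using good_step[OF gb i refl] mv by auto
    have "sg m = sg (U i m) \<circ> s i" using good_sg[OF g u(1)] u(2) by simp
    then show "sg (U i m) = sg m \<circ> s i" by (simp add: comp_assoc)
  qed
  show ?thesis using A B C good_desc[OF g] by blast
qed

end


locale hk =
  fixes M :: "'b list set" and n :: nat and U :: "nat \<Rightarrow> 'b list \<Rightarrow> 'b list"
  assumes closed: "i \<in> {1..<n} \<Longrightarrow> m \<in> M \<Longrightarrow> U i m \<in> M"
  and len: "m \<in> M \<Longrightarrow> length m = Suc n"
  and loc: "i \<in> {1..<n} \<Longrightarrow> m \<in> M \<Longrightarrow> k < length m \<Longrightarrow> k \<noteq> i \<Longrightarrow> U i m ! k = m ! k"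
  and idem: "i \<in> {1..<n} \<Longrightarrow> m \<in> M \<Longrightarrow> U i (U i m) = U i m"
  and comm: "i \<in> {1..<n} \<Longrightarrow> j \<in> {1..<n} \<Longrightarrow> m \<in> M \<Longrightarrow> (i \<ge> j+2 \<or> j \<ge> i+2) \<Longrightarrow> U i (U j m) = U j (U i m)"
  and braid: "1 \<le> i \<Longrightarrow> i+1 < n \<Longrightarrow> m \<in> M \<Longrightarrow> U i (U (i+1) (U i m)) = U (i+1) (U i (U (i+1) m))"
begin

lemma Uapp_in: "set w \<subseteq> {1..<n} \<Longrightarrow> m \<in> M \<Longrightarrow> Uapp U w m \<in> M"
  by (induction w) (auto intro: closed)

lemma Uapp_nth: "set w \<subseteq> {1..<n} \<Longrightarrow> m \<in> M \<Longrightarrow> k < Suc n \<Longrightarrow> k \<notin> set w \<Longrightarrow> Uapp U w m ! k = m ! k"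
proof (induction w)
  case Nil then show ?case by simp
next
  case (Cons i w)
  have "Uapp U w m \<in> M" using Uapp_in Cons by auto
  then show ?case using Cons loc[of i "Uapp U w m" k] len by auto
qed

lemma Uapp_fix: "set w \<subseteq> {1..<n} \<Longrightarrow> (\<forall>i\<in>set w. U i m = m) \<Longrightarrow> Uapp U w m = m"
  by (induction w) auto

lemma commute_word:
  "j \<in> {1..<n} \<Longrightarrow> set v \<subseteq> {1..<n} \<Longrightarrow> (\<forall>x\<in>set v. x \<ge> j+2 \<or> j \<ge> x+2) \<Longrightarrow> m \<in> M
   \<Longrightarrow> U j (Uapp U v m) = Uapp U v (U j m)"
proof (induction v)
  case Nil then show ?case by simp
next
  case (Cons x v)
  have "Uapp U v m \<in> M" using Uapp_in Cons by auto
  then have "U j (U x (Uapp U v m)) = U x (U j (Uapp U v m))"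
    using comm[of j x] Cons by auto
  then show ?case using Cons by simp
qed

fun Dl :: "nat \<Rightarrow> nat \<Rightarrow> nat list" where
  "Dl a 0 = [a]"
| "Dl a (Suc k) = (a + Suc k) # Dl a k"

lemma set_Dl: "set (Dl a k) = {a..a+k}"
  by (induction k) auto

lemma Dl_hd: "\<exists>T. Dl a k = (a+k) # T \<and> set T \<subseteq> {a..<a+k}"
  by (cases k) (auto simp: set_Dl)

lemma Dtop: "a \<ge> 1 \<Longrightarrow> a + k < n \<Longrightarrow> m \<in> M \<Longrightarrow> U (a+k) (Uapp U (Dl a k) m) = Uapp U (Dl a k) m"
proof -
  assume h: "a \<ge> 1" "a + k < n" "m \<in> M"
  obtain T where T: "Dl a k = (a+k) # T" "set T \<subseteq> {a..<a+k}" using Dl_hd by blast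
  have "Uapp U T m \<in> M" using Uapp_in T h by (meson atLeastLessThan_iff subset_iff le_trans less_trans not_less)
  then show ?thesis using T idem[of "a+k"] h by auto
qed

lemma Dshift: "a \<ge> 1 \<Longrightarrow> a + k < n \<Longrightarrow> m \<in> M \<Longrightarrow> a \<le> j \<Longrightarrow> j < a + k
   \<Longrightarrow> U j (Uapp U (Dl a k) m) = Uapp U (Dl a k) (U (j+1) m)"
proof (induction k arbitrary: j)
  case 0 then show ?case by simp
next
  case (Suc k)
  define b where "b = a + Suc k"
  have bN: "b \<in> {1..<n}" using Suc by (auto simp: b_def)
  have DN: "set (Dl a k) \<subseteq> {1..<n}" using Suc by (auto simp: set_Dl)
  have XM: "Uapp U (Dl a k) m \<in> M" using Uapp_in DN Suc by blast
  show ?case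
  proof (cases "j < a + k")
    case True
    have jN: "j \<in> {1..<n}" using Suc True by auto
    have "U j (U b (Uapp U (Dl a k) m)) = U b (U j (Uapp U (Dl a k) m))"
      using comm[OF jN bN XM] True by (auto simp: b_def)
    also have "U j (Uapp U (Dl a k) m) = Uapp U (Dl a k) (U (j+1) m)"
      using Suc True by auto
    finally show ?thesis by (simp add: b_def)
  next
    case False
    then have jk: "j = a + k" using Suc by auto
    obtain T where T: "Dl a k = (a+k) # T" "set T \<subseteq> {a..<a+k}" using Dl_hd by blast
    have TN: "set T \<subseteq> {1..<n}" using T Suc by auto
    have YM: "Uapp U T m \<in> M" using Uapp_in TN Suc by blast
    have i1: "1 \<le> a + k" "a + k + 1 < n" using Suc by auto
    have far: "\<forall>x\<in>set T. x \<ge> b+2 \<or> b \<ge> x+2" using T by (auto simp: b_def)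
    have "U j (Uapp U (Dl a (Suc k)) m) = U (a+k) (U (a+k+1) (U (a+k) (Uapp U T m)))"
      using T jk by simp
    also have "\<dots> = U (a+k+1) (U (a+k) (U (a+k+1) (Uapp U T m)))"
      using braid[OF i1 YM] .
    also have "U (a+k+1) (Uapp U T m) = Uapp U T (U (a+k+1) m)"
      using commute_word[OF bN TN far Suc(4)] by (simp add: b_def)
    finally show ?thesis using T jk by simp
  qed
qed

fun Wd :: "nat \<Rightarrow> nat \<Rightarrow> nat list" where
  "Wd a 0 = [a]"
| "Wd a (Suc k) = Dl a (Suc k) @ Wd (Suc a) k"

lemma set_Wd: "set (Wd a k) \<subseteq> {a..a+k}"
proof (induction k arbitrary: a)
  case 0 then show ?case by simp
next
  case (Suc k)
  have "set (Wd (Suc a) k) \<subseteq> {Suc a..Suc a + k}" using Suc.IH .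
  then show ?case by (auto simp: set_Dl)
qed

lemma Wd_absorb: "a \<ge> 1 \<Longrightarrow> a + k < n \<Longrightarrow> m \<in> M \<Longrightarrow> a \<le> j \<Longrightarrow> j \<le> a + k
   \<Longrightarrow> U j (Uapp U (Wd a k) m) = Uapp U (Wd a k) m"
proof (induction k arbitrary: a j)
  case 0 then show ?case using idem by auto
next
  case (Suc k)
  have WN: "set (Wd (Suc a) k) \<subseteq> {1..<n}" using set_Wd[of "Suc a" k] Suc by auto
  have YM: "Uapp U (Wd (Suc a) k) m \<in> M" using Uapp_in WN Suc by blast
  show ?case
  proof (cases "j = a + Suc k")
    case True
    then show ?thesis using Dtop[OF Suc(2,3) YM] by (simp add: Uapp_append)
  next
    case False
    then have j: "j < a + Suc k" using Suc by auto
    have "U j (Uapp U (Dl a (Suc k)) (Uapp U (Wd (Suc a) k) m))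
        = Uapp U (Dl a (Suc k)) (U (j+1) (Uapp U (Wd (Suc a) k) m))"
      using Dshift[OF Suc(2,3) YM Suc(5) j] .
    also have "U (j+1) (Uapp U (Wd (Suc a) k) m) = Uapp U (Wd (Suc a) k) m"
      using Suc.IH[of "Suc a" "j+1"] Suc j by auto
    finally show ?thesis by (simp add: Uapp_append)
  qed
qed

lemma absorb: "J \<subseteq> {1..<n} \<Longrightarrow> \<exists>W. set W \<subseteq> J \<and> (\<forall>j\<in>J. \<forall>m\<in>M. U j (Uapp U W m) = Uapp U W m)"
proof (induction "card J" arbitrary: J rule: less_induct)
  case less
  show ?case
  proof (cases "J = {}")
    case True then show ?thesis by (intro exI[of _ "[]"]) auto
  next
    case False
    have finJ: "finite J" using less(2) finite_subset by blast
    define b where "b = Max J"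
    have bJ: "b \<in> J" using Max_in finJ False b_def by blast
    define A where "A = {a. a \<le> b \<and> {a..b} \<subseteq> J}"
    have bA: "b \<in> A" using bJ A_def by auto
    have finA: "finite A" by (rule finite_subset[of _ "{..b}"]) (auto simp: A_def)
    define a where "a = Min A"
    have aA: "a \<in> A" using Min_in finA bA a_def by blast
    have ab: "a \<le> b" "{a..b} \<subseteq> J" using aA A_def by auto
    have amin: "\<And>x. x \<in> A \<Longrightarrow> a \<le> x" using Min_le finA a_def by blast
    have "a \<in> J" using ab by auto
    then have a1: "a \<ge> 1" using less(2) by auto
    have bn: "b < n" using bJ less(2) by auto
    define J' where "J' = J - {a..b}"
    have J'small: "\<And>x. x \<in> J' \<Longrightarrow> x + 2 \<le> a"
    proof -
      fix x assume x: "x \<in> J'"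
      have "x \<le> b" using x Max_ge finJ b_def J'_def by auto
      then have xa: "x < a" using x J'_def by auto
      show "x + 2 \<le> a"
      proof (rule ccontr)
        assume "\<not> x + 2 \<le> a"
        then have "x = a - 1" using xa by auto
        then have "{x..b} \<subseteq> J" using ab x J'_def by (auto, metis Suc_pred' a1 atLeastAtMost_iff diff_le_self le_antisym not_less_eq_eq subsetD zero_less_one less_le_trans)
        then have "x \<in> A" using A_def \<open>x \<le> b\<close> by auto
        then show False using amin xa by fastforce
      qed
    qed
    have "card J' < card J" using J'_def ab finJ bJ
      by (metis Diff_subset atLeastAtMost_iff card_seteq finite_subset Diff_iff order_refl not_le psubsetI psubset_card_mono)
    moreover have "J' \<subseteq> {1..<n}" using less(2) J'_def by auto
    ultimately obtain W' where W': "set W' \<subseteq> J'" "\<forall>j\<in>J'. \<forall>m\<in>M. U j (Uapp U W' m) = Uapp U W' m"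
      using less(1) by blast
    define Wab where "Wab = Wd a (b - a)"
    have WabS: "set Wab \<subseteq> {a..b}" using set_Wd[of a "b-a"] ab by (simp add: Wab_def)
    have WabN: "set Wab \<subseteq> {1..<n}" using WabS a1 bn by auto
    have W'N: "set W' \<subseteq> {1..<n}" using W' less(2) J'_def by auto
    show ?thesis
    proof (intro exI[of _ "W' @ Wab"] conjI ballI)
      show "set (W' @ Wab) \<subseteq> J" using W'(1) WabS ab J'_def by auto
    next
      fix j m assume j: "j \<in> J" and m: "m \<in> M"
      have XM: "Uapp U Wab m \<in> M" using Uapp_in WabN m by blast
      show "U j (Uapp U (W' @ Wab) m) = Uapp U (W' @ Wab) m"
      proof (cases "j \<in> J'")
        case True
        then show ?thesis using W'(2) XM by (simp add: Uapp_append)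
      next
        case False
        then have jab: "a \<le> j" "j \<le> b" using j J'_def by auto
        have jN: "j \<in> {1..<n}" using j less(2) by auto
        have far: "\<forall>x\<in>set W'. x \<ge> j+2 \<or> j \<ge> x+2" using W'(1) J'small jab by fastforce
        have "U j (Uapp U W' (Uapp U Wab m)) = Uapp U W' (U j (Uapp U Wab m))"
          using commute_word[OF jN W'N far XM] .
        also have "U j (Uapp U Wab m) = Uapp U Wab m"
          using Wd_absorb[OF a1 _ m jab(1)] jab bn ab by (simp add: Wab_def)
        finally show ?thesis by (simp add: Uapp_append)
      qed
    qed
  qed
qed

end


lemma chain_subset: "is_chain T \<Longrightarrow> S \<subseteq> T \<Longrightarrow> is_chain S"
  unfolding is_chain_def by blast

lemma chain_ext: "is_chain (C::'a::{order,finite} set) \<Longrightarrow> \<exists>S. maximal_chain S \<and> C \<subseteq> S"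
proof (induction "card (UNIV::'a set) - card C" arbitrary: C rule: less_induct)
  case less
  show ?case
  proof (cases "maximal_chain C")
    case True then show ?thesis by blast
  next
    case False
    then obtain T where T: "is_chain T" "C \<subseteq> T" "T \<noteq> C" using less(2) unfolding maximal_chain_def by blast
    have "card C < card T" using T by (simp add: psubset_card_mono psubsetI)
    moreover have "card T \<le> card (UNIV::'a set)" by (simp add: card_mono)
    ultimately have "card (UNIV::'a set) - card T < card (UNIV::'a set) - card C" by linarith
    then obtain S where "maximal_chain S" "T \<subseteq> S" using less(1) T(1) by blast
    then show ?thesis using T by blast
  qed
qed

lemma chain_list: "finite S \<Longrightarrow> is_chain (S::'a::order set) \<Longrightarrow> \<exists>l. sorted_wrt (<) l \<and> set l = S"
proof (induction S rule: finite_induct)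
  case empty then show ?case by auto
next
  case (insert x F)
  then obtain l where l: "sorted_wrt (<) l" "set l = F" using chain_subset by blast
  define l' where "l' = filter (\<lambda>y. y < x) l @ x # filter (\<lambda>y. x < y) l"
  have cmp: "\<And>y. y \<in> F \<Longrightarrow> y < x \<or> x < y"
    using insert(2,4) unfolding is_chain_def by (metis insertCI order.order_iff_strict)
  have "sorted_wrt (<) l'" unfolding l'_def
    using l(1) by (auto simp: sorted_wrt_append sorted_wrt_filter intro: less_trans)
  moreover have "set l' = insert x F" unfolding l'_def using l(2) cmp by auto
  ultimately show ?case by blast
qed

lemma sorted_distinct: "sorted_wrt (<) (l::'a::order list) \<Longrightarrow> distinct l"
  by (induction l) auto

lemma mchain_props:
  assumes g: "graded_rank TYPE('a::{order,finite}) n" and l: "l \<in> mchains TYPE('a)"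
  shows "length l = Suc n" "distinct l" "is_chain (set l)" "sorted_wrt (<) l" "maximal_chain (set l)"
proof -
  show sl: "sorted_wrt (<) l" and mc: "maximal_chain (set l)" using l by (auto simp: mchains_def)
  show d: "distinct l" using sorted_distinct sl .
  show "is_chain (set l)" using mc maximal_chain_def by blast
  have "card (set l) = n + 1" using g mc unfolding graded_rank_def by blast
  then show "length l = Suc n" using distinct_card[OF d] by simp
qed

lemma nth_less: "sorted_wrt (<) (l::'a::order list) \<Longrightarrow> i < j \<Longrightarrow> j < length l \<Longrightarrow> l ! i < l ! j"
  using sorted_wrt_nth_less by blast

lemma nth_le: assumes "sorted_wrt (<) (l::'a::order list)" "i \<le> j" "j < length l" shows "l ! i \<le> l ! j"
proof (cases "i = j")
  case True then show ?thesis by simp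
next
  case False then have "l ! i < l ! j" using nth_less[OF assms(1)] assms by simp
  then show ?thesis by (rule order.strict_implies_order)
qed

lemma covers_nth:
  assumes g: "graded_rank TYPE('a::{order,finite}) n" and l: "l \<in> mchains TYPE('a)" and k: "k + 1 < length l"
  shows "covers (l ! (k+1)) (l ! k)"
proof -
  note P = mchain_props[OF g l]
  have lt: "l ! k < l ! (k+1)" using nth_less[OF P(4)] k by simp
  have "\<not> (\<exists>z. l ! k < z \<and> z < l ! (k+1))"
  proof
    assume "\<exists>z. l ! k < z \<and> z < l ! (k+1)"
    then obtain z where z: "l ! k < z" "z < l ! (k+1)" by blast
    have notin: "z \<notin> set l"
    proof
      assume "z \<in> set l"
      then obtain j where j: "j < length l" "z = l ! j" by (auto simp: in_set_conv_nth)
      show False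
      proof (cases "j \<le> k")
        case True then have "l ! j \<le> l ! k" using nth_le[OF P(4)] k by simp
        then show False using z j by (metis less_le_not_le order_trans)
      next
        case False then have "l ! (k+1) \<le> l ! j" using nth_le[OF P(4)] j by simp
        then show False using z j by (metis less_le_not_le order_trans)
      qed
    qed
    have "is_chain (insert z (set l))"
      unfolding is_chain_def
    proof (intro ballI)
      fix x y assume x: "x \<in> insert z (set l)" and y: "y \<in> insert z (set l)"
      have cz: "\<And>u. u \<in> set l \<Longrightarrow> u \<le> z \<or> z \<le> u"
      proof -
        fix u assume "u \<in> set l"
        then obtain j where j: "j < length l" "u = l ! j" by (auto simp: in_set_conv_nth)
        show "u \<le> z \<or> z \<le> u"
        proof (cases "j \<le> k")
          case True then have "l ! j \<le> l ! k" using nth_le[OF P(4)] k by simp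
          then show ?thesis using z j by (metis order.strict_implies_order order_trans)
        next
          case False then have "l ! (k+1) \<le> l ! j" using nth_le[OF P(4)] j by simp
          then show ?thesis using z j by (metis order.strict_implies_order order_trans)
        qed
      qed
      show "x \<le> y \<or> y \<le> x" using x y cz P(3) unfolding is_chain_def by auto
    qed
    then have "insert z (set l) = set l" using P(5) unfolding maximal_chain_def by blast
    then show False using notin by blast
  qed
  then show ?thesis using lt unfolding covers_def by blast
qed

lemma rank_nth:
  assumes g: "graded_rank TYPE('a::{order,finite}) n" and l: "l \<in> mchains TYPE('a)" and k: "k < length l"
  shows "rank (l ! k) = k"
proof -
  note P = mchain_props[OF g l]
  let ?A = "{card S - 1 | S. is_chain S \<and> S \<noteq> {} \<and> (\<forall>y\<in>S. y \<le> l ! k)}"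
  have fin: "finite ?A"
  proof -
    have "?A \<subseteq> (\<lambda>S. card S - 1) ` (UNIV::'a set set)"
    proof (rule subsetI)
      fix x assume "x \<in> ?A"
      then obtain S :: "'a set" where "x = card S - 1" by blast
      then show "x \<in> (\<lambda>S. card S - 1) ` (UNIV::'a set set)" by (intro image_eqI[where x=S]) auto
    qed
    then show ?thesis by (rule finite_subset) (rule finite_imageI, simp)
  qed
  have mem: "k \<in> ?A"
  proof -
    let ?S = "set (take (Suc k) l)"
    have "is_chain ?S" using chain_subset[OF P(3)] by (meson set_take_subset)
    moreover have "?S \<noteq> {}" using k by (cases l) auto
    moreover have "\<forall>y\<in>?S. y \<le> l ! k"
    proof
      fix y assume "y \<in> ?S"
      then obtain j where j: "j < length (take (Suc k) l)" "y = take (Suc k) l ! j" by (auto simp: in_set_conv_nth)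
      then have "j \<le> k" "y = l ! j" by auto
      then show "y \<le> l ! k" using nth_le[OF P(4)] k by simp
    qed
    moreover have "card ?S = Suc k" using distinct_card[of "take (Suc k) l"] P(2) k by simp
    ultimately have "is_chain ?S \<and> ?S \<noteq> {} \<and> (\<forall>y\<in>?S. y \<le> l ! k) \<and> k = card ?S - 1" by simp
    then show ?thesis by blast
  qed
  have ub: "\<And>x. x \<in> ?A \<Longrightarrow> x \<le> k"
  proof -
    fix x assume "x \<in> ?A"
    then obtain S where S: "x = card S - 1" "is_chain S" "S \<noteq> {}" "\<forall>y\<in>S. y \<le> l ! k" by blast
    let ?D = "set (drop (Suc k) l)"
    have Dgt: "\<And>t. t \<in> ?D \<Longrightarrow> l ! k < t"
    proof -
      fix t assume "t \<in> ?D"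
      then obtain j where j: "j < length (drop (Suc k) l)" "t = drop (Suc k) l ! j" by (auto simp: in_set_conv_nth)
      then have "t = l ! (Suc k + j)" "Suc k + j < length l" using k by auto
      then show "l ! k < t" using nth_less[OF P(4)] by simp
    qed
    have disj: "S \<inter> ?D = {}"
    proof (rule ccontr)
      assume "S \<inter> ?D \<noteq> {}" then obtain t where "t \<in> S" "t \<in> ?D" by blast
      then have "t \<le> l!k" "l!k < t" using S(4) Dgt by auto
      then show False by (simp add: less_le_not_le)
    qed
    have ch: "is_chain (S \<union> ?D)"
      unfolding is_chain_def
    proof (intro ballI)
      fix x y assume x: "x \<in> S \<union> ?D" and y: "y \<in> S \<union> ?D"
      have DC: "is_chain ?D" using chain_subset[OF P(3)] by (meson set_drop_subset)
      have "\<And>u v. u \<in> S \<Longrightarrow> v \<in> ?D \<Longrightarrow> u \<le> v"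
        using S(4) Dgt by (meson order.strict_implies_order order_trans)
      then show "x \<le> y \<or> y \<le> x" using x y S(2) DC unfolding is_chain_def by blast
    qed
    obtain T where T: "maximal_chain T" "S \<union> ?D \<subseteq> T" using chain_ext[OF ch] by blast
    have cT: "card T = n + 1" using g T(1) unfolding graded_rank_def by blast
    have "card (S \<union> ?D) \<le> card T" using T(2) by (simp add: card_mono)
    moreover have "card (S \<union> ?D) = card S + card ?D" using disj by (simp add: card_Un_disjoint)
    moreover have "card ?D = length l - Suc k" using distinct_card[of "drop (Suc k) l"] P(2) by simp
    ultimately have "card S \<le> Suc k" using cT P(1) k by simp
    then show "x \<le> k" using S(1) by simp
  qed
  show ?thesis unfolding rank_def
    by (rule Max_eqI[OF fin ub mem])
qed

lemma realize:
  assumes g: "graded_rank TYPE('a::{order,finite}) n" and C: "is_chain (C::'a set)"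
  shows "\<exists>x\<in>mchains TYPE('a). C = (\<lambda>k. x ! k) ` (rank ` C)"
proof -
  obtain S where S: "maximal_chain S" "C \<subseteq> S" using chain_ext[OF C] by blast
  have Sc: "is_chain S" using S(1) unfolding maximal_chain_def by (rule conjunct1)
  obtain l where l: "sorted_wrt (<) l" "set l = S"
    using chain_list[OF finite Sc] by blast
  have lM: "l \<in> mchains TYPE('a)" using l S(1) by (simp add: mchains_def)
  have "\<And>c. c \<in> C \<Longrightarrow> l ! rank c = c"
  proof -
    fix c assume "c \<in> C"
    then have "c \<in> set l" using S l by auto
    then obtain j where j: "j < length l" "c = l ! j" by (auto simp: in_set_conv_nth)
    then show "l ! rank c = c" using rank_nth[OF g lM j(1)] by simp
  qed
  then have eqs: "\<And>c. c \<in> C \<Longrightarrow> l ! rank c = c" .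
  have "(\<lambda>k. l ! k) ` (rank ` C) = (\<lambda>c. l ! rank c) ` C" by (simp add: image_image)
  also have "\<dots> = (\<lambda>c. c) ` C" by (rule image_cong) (simp_all add: eqs)
  also have "\<dots> = C" by simp
  finally have "C = (\<lambda>k. l ! k) ` (rank ` C)" by simp
  then show ?thesis using lM by blast
qed

lemma mchains_nonempty: "mchains TYPE('a::{order,finite}) \<noteq> {}"
proof -
  have "is_chain ({}::'a set)" by (simp add: is_chain_def)
  then obtain S :: "'a set" where S: "maximal_chain S" using chain_ext by blast
  then have Sc: "is_chain S" unfolding maximal_chain_def by (rule conjunct1)
  obtain l where "sorted_wrt (<) l" "set l = S"
    using chain_list[OF finite Sc] by blast
  then show ?thesis using S by (auto simp: mchains_def)
qed

lemma mchains_finite: "graded_rank TYPE('a::{order,finite}) n \<Longrightarrow> finite (mchains TYPE('a))"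
proof -
  assume g: "graded_rank TYPE('a) n"
  have "mchains TYPE('a) \<subseteq> {xs. set xs \<subseteq> UNIV \<and> length xs \<le> Suc n}"
    using mchain_props(1)[OF g] by auto
  then show ?thesis by (rule finite_subset) (rule finite_lists_length_le, simp)
qed

lemma nobow_poset:
  assumes g: "graded_rank TYPE('a::{order,finite}) n" and bf: "bowtie_free TYPE('a)"
    and i: "1 \<le> i" "i+1 < n"
    and x: "x1 \<in> mchains TYPE('a)" "x2 \<in> mchains TYPE('a)" "x3 \<in> mchains TYPE('a)" "x4 \<in> mchains TYPE('a)"
    and e: "x1!i = x2!i" "x3!i = x4!i" "x1!(i+1) = x3!(i+1)" "x2!(i+1) = x4!(i+1)"
       "x1!i \<noteq> x3!i" "x1!(i+1) \<noteq> x2!(i+1)"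
  shows False
proof -
  have L: "i + 1 < length x1" "i + 1 < length x2" "i + 1 < length x3" "i + 1 < length x4"
    using mchain_props(1)[OF g] x i by auto
  have c1: "covers (x1!(i+1)) (x1!i)" using covers_nth[OF g x(1) L(1)] .
  have c2: "covers (x2!(i+1)) (x2!i)" using covers_nth[OF g x(2) L(2)] .
  have c3: "covers (x3!(i+1)) (x3!i)" using covers_nth[OF g x(3) L(3)] .
  have c4: "covers (x4!(i+1)) (x4!i)" using covers_nth[OF g x(4) L(4)] .
  define q where "q = x1!(i+1)"
  define q' where "q' = x2!(i+1)"
  define p where "p = x1!i"
  define p' where "p' = x3!i"
  have cv: "covers q p" "covers q p'" "covers q' p" "covers q' p'"
    using c1 c2 c3 c4 e by (auto simp: q_def q'_def p_def p'_def)
  have lt: "p < q" "p' < q" "p < q'" "p' < q'" using cv unfolding covers_def by auto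
  have ne: "p \<noteq> q" "p' \<noteq> q" "p \<noteq> q'" "p' \<noteq> q'" using lt by (simp_all add: less_imp_neq)
  have ne2: "q \<noteq> q'" "p \<noteq> p'" using e(5,6) by (simp_all add: q_def q'_def p_def p'_def)
  have "distinct [q, q', p, p']" using ne ne2 by auto
  then show False using bf cv unfolding bowtie_free_def by blast
qed



lemma sum_L:
  assumes "T \<subseteq> {1..<n}"
  shows "(\<Sum>S\<in>Pow {1..<n}. f S * L_fund S n T) = (\<Sum>S\<in>Pow T. (f S :: int))"
proof -
  have "(\<Sum>S\<in>Pow {1..<n}. f S * L_fund S n T) = (\<Sum>S\<in>Pow {1..<n}. if S \<in> Pow T then f S else 0)"
    using assms by (intro sum.cong) (auto simp: L_fund_def)
  also have "\<dots> = (\<Sum>S\<in>Pow {1..<n} \<inter> Pow T. f S)"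
    by (rule sum.inter_restrict[symmetric]) simp
  also have "Pow {1..<n} \<inter> Pow T = Pow T" using assms by auto
  finally show ?thesis .
qed

lemma mobius:
  assumes fin: "finite N" and h: "\<forall>T\<subseteq>N. sum f (Pow T) = (sum g (Pow T) :: int)"
  shows "T \<subseteq> N \<Longrightarrow> f T = g T"
proof (induction "card T" arbitrary: T rule: less_induct)
  case less
  have finT: "finite T" by (rule finite_subset[OF less(2) fin])
  have eq: "\<And>S. S \<in> Pow T - {T} \<Longrightarrow> f S = g S"
  proof -
    fix S assume S: "S \<in> Pow T - {T}"
    then have "S \<subset> T" by auto
    then have "card S < card T" by (rule psubset_card_mono[OF finT])
    then show "f S = g S" using less(1) S less(2) by auto
  qed
  have "sum f (Pow T) = f T + sum f (Pow T - {T})" using finT by (simp add: sum.remove)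
  moreover have "sum g (Pow T) = g T + sum g (Pow T - {T})" using finT by (simp add: sum.remove)
  moreover have "sum f (Pow T - {T}) = sum g (Pow T - {T})" using eq by (rule sum.cong[OF refl])
  ultimately show ?case using h less(2) by simp
qed

lemma ga_parts:
  assumes "good_action tp n U"
  shows "(\<forall>i\<in>{1..<n}. \<forall>m\<in>mchains tp. U i m \<in> mchains tp) \<and>
    (\<forall>i\<in>{1..<n}. \<forall>m\<in>mchains tp. \<forall>j<length m. j \<noteq> i \<longrightarrow> U i m ! j = m ! j) \<and>
    (\<forall>i\<in>{1..<n}. \<forall>m\<in>mchains tp. U i (U i m) = U i m) \<and>
    (\<forall>i\<in>{1..<n}. \<forall>j\<in>{1..<n}. \<forall>m\<in>mchains tp.
        (i \<ge> j + 2 \<or> j \<ge> i + 2) \<longrightarrow> U i (U j m) = U j (U i m)) \<and>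
    (\<forall>i. 1 \<le> i \<and> i + 1 < n \<longrightarrow> (\<forall>m\<in>mchains tp.
        U i (U (i+1) (U i m)) = U (i+1) (U i (U (i+1) m))))"
  using assms unfolding good_action_def by (elim conjE) (intro conjI; assumption)

lemma ga_ex:
  assumes "good_action tp n U"
  shows "\<exists>b c :: nat set \<Rightarrow> int.
        (\<forall>T. F_P tp n T = (\<Sum>S\<in>Pow {1..<n}. b S * L_fund S n T)) \<and>
        (\<forall>w. set w \<subseteq> {1..<n} \<longrightarrow> char_P tp U w = (\<Sum>S\<in>Pow {1..<n}. c S * chi S w)) \<and>
        (\<forall>T. (\<Sum>S\<in>Pow {1..<n}. b S * L_fund ({1..<n} - S) n T)
            = (\<Sum>S\<in>Pow {1..<n}. c S * L_fund S n T))"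
  using assms unfolding good_action_def by (elim conjE) (erule exE, erule exE, rule exI, rule exI, assumption)

lemma count_fix:
  assumes ga: "good_action TYPE('a::{order,finite}) n U" and w: "set w \<subseteq> {1..<n}"
  shows "card {m \<in> mchains TYPE('a). Uapp U w m = m} = flag_f TYPE('a) ({1..<n} - set w)"
proof -
  let ?N = "{1..<n}"
  let ?J = "set w"
  obtain b c :: "nat set \<Rightarrow> int" where
    B: "\<forall>T. F_P TYPE('a) n T = (\<Sum>S\<in>Pow ?N. b S * L_fund S n T)" and
    C: "\<forall>w. set w \<subseteq> ?N \<longrightarrow> char_P TYPE('a) U w = (\<Sum>S\<in>Pow ?N. c S * chi S w)" and
    E: "\<forall>T. (\<Sum>S\<in>Pow ?N. b S * L_fund (?N - S) n T) = (\<Sum>S\<in>Pow ?N. c S * L_fund S n T)"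
    using ga_ex[OF ga] by blast
  have re: "\<And>T. (\<Sum>S\<in>Pow ?N. b S * L_fund (?N - S) n T) = (\<Sum>S\<in>Pow ?N. b (?N - S) * L_fund S n T)"
    by (rule sum.reindex_bij_witness[where i="\<lambda>S. ?N - S" and j="\<lambda>S. ?N - S"]) (auto simp: double_diff)
  have "\<forall>T\<subseteq>?N. sum (\<lambda>S. b (?N - S)) (Pow T) = sum c (Pow T)"
  proof (intro allI impI)
    fix T assume T: "T \<subseteq> ?N"
    show "sum (\<lambda>S. b (?N - S)) (Pow T) = sum c (Pow T)"
      using E re sum_L[OF T, of "\<lambda>S. b (?N - S)"] sum_L[OF T, of c] by simp
  qed
  then have cb: "\<And>S. S \<subseteq> ?N \<Longrightarrow> b (?N - S) = c S"
    using mobius[of ?N "\<lambda>S. b (?N - S)" c, OF finite_atLeastLessThan] by blast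
  let ?Fx = "{m \<in> mchains TYPE('a). Uapp U w m = m}"
  have "char_P TYPE('a) U w = (-1) ^ length w * int (card ?Fx)"
    by (simp add: char_P_def)
  moreover have "char_P TYPE('a) U w = (\<Sum>S\<in>Pow ?N. c S * chi S w)" using C w by blast
  moreover have "(\<Sum>S\<in>Pow ?N. c S * chi S w) = (-1) ^ length w * (\<Sum>S\<in>Pow ?N \<inter> {S. ?J \<subseteq> S}. c S)"
  proof -
    have "(\<Sum>S\<in>Pow ?N. c S * chi S w) = (\<Sum>S\<in>Pow ?N. (-1) ^ length w * (if S \<in> {S. ?J \<subseteq> S} then c S else 0))"
      by (intro sum.cong) (auto simp: chi_def)
    also have "\<dots> = (-1) ^ length w * (\<Sum>S\<in>Pow ?N. (if S \<in> {S. ?J \<subseteq> S} then c S else 0))"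
      by (simp add: sum_distrib_left)
    also have "(\<Sum>S\<in>Pow ?N. (if S \<in> {S. ?J \<subseteq> S} then c S else 0)) = (\<Sum>S\<in>Pow ?N \<inter> {S. ?J \<subseteq> S}. c S)"
      by (rule sum.inter_restrict[symmetric]) simp
    finally show ?thesis .
  qed
  ultimately have c1: "int (card ?Fx) = (\<Sum>S\<in>Pow ?N \<inter> {S. ?J \<subseteq> S}. c S)"
    by (simp add: power_minus1_even)
  have "(\<Sum>S\<in>Pow ?N \<inter> {S. ?J \<subseteq> S}. c S) = (\<Sum>S\<in>Pow ?N \<inter> {S. ?J \<subseteq> S}. b (?N - S))"
    using cb by (intro sum.cong) (auto simp del: cb)
  also have "\<dots> = (\<Sum>D\<in>Pow (?N - ?J). b D)"
    by (rule sum.reindex_bij_witness[where i="\<lambda>S. ?N - S" and j="\<lambda>S. ?N - S"]) (use w in auto)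
  also have "\<dots> = (\<Sum>S\<in>Pow ?N. b S * L_fund S n (?N - ?J))"
    using sum_L[of "?N - ?J" n b] by auto
  also have "\<dots> = F_P TYPE('a) n (?N - ?J)" using B by simp
  also have "\<dots> = int (flag_f TYPE('a) (?N - ?J))" by (simp add: F_P_def)
  finally show ?thesis using c1 by simp
qed



lemma flag_f_empty: "flag_f TYPE('a::{order,finite}) {} = 1"
proof -
  have "{C::'a set. is_chain C \<and> rank ` C = {}} = {{}}" by (auto simp: is_chain_def)
  then show ?thesis by (simp add: flag_f_def)
qed

theorem mainTheorem13:
  fixes n :: nat and U :: "nat \<Rightarrow> 'a::{order,finite} list \<Rightarrow> 'a list"
  assumes "has_bot_top TYPE('a)"
    and "graded_rank TYPE('a) n"
    and "bowtie_free TYPE('a)"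
    and "good_action TYPE('a) n U"
  shows "(\<forall>m\<in>mchains TYPE('a). \<forall>w. set w \<subseteq> {1..<n} \<longrightarrow>
            ((restless U w m \<and> Uapp U w m = m0 TYPE('a) n U)
               \<longrightarrow> reduced_expr n w (omega_m TYPE('a) n U m)) \<and>
            (reduced_expr n w (omega_m TYPE('a) n U m)
               \<longrightarrow> restless U w m \<and> Uapp U w m = m0 TYPE('a) n U))
       \<and> (\<forall>m\<in>mchains TYPE('a). \<forall>i\<in>{1..<n}.
            (has_descent (omega_m TYPE('a) n U m) i \<longleftrightarrow> U i m \<noteq> m) \<and>
            (U i m \<noteq> m \<longrightarrow>
               omega_m TYPE('a) n U (U i m) = omega_m TYPE('a) n U m \<circ> s i))"
proof -
  note g = assms(2) and bf = assms(3) and ga = assms(4)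
  let ?M = "mchains TYPE('a)"
  let ?N = "{1..<n}"
  note GP = ga_parts[OF ga]
  note P1 = GP[THEN conjunct1]
  note P2 = GP[THEN conjunct2, THEN conjunct1]
  note P3 = GP[THEN conjunct2, THEN conjunct2, THEN conjunct1]
  note P4 = GP[THEN conjunct2, THEN conjunct2, THEN conjunct2, THEN conjunct1]
  note P5 = GP[THEN conjunct2, THEN conjunct2, THEN conjunct2, THEN conjunct2]
  have closed: "\<And>i m. i \<in> ?N \<Longrightarrow> m \<in> ?M \<Longrightarrow> U i m \<in> ?M" using P1 by blast
  have len: "\<And>m. m \<in> ?M \<Longrightarrow> length m = Suc n" using mchain_props(1)[OF g] by blast
  have loc: "\<And>i m k. i \<in> ?N \<Longrightarrow> m \<in> ?M \<Longrightarrow> k < length m \<Longrightarrow> k \<noteq> i \<Longrightarrow> U i m ! k = m ! k"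
    using P2 by blast
  have idem: "\<And>i m. i \<in> ?N \<Longrightarrow> m \<in> ?M \<Longrightarrow> U i (U i m) = U i m" using P3 by blast
  have comm: "\<And>i j m. i \<in> ?N \<Longrightarrow> j \<in> ?N \<Longrightarrow> m \<in> ?M \<Longrightarrow> (i \<ge> j+2 \<or> j \<ge> i+2) \<Longrightarrow> U i (U j m) = U j (U i m)"
    using P4 by blast
  have braid: "\<And>i m. 1 \<le> i \<Longrightarrow> i+1 < n \<Longrightarrow> m \<in> ?M \<Longrightarrow> U i (U (i+1) (U i m)) = U (i+1) (U i (U (i+1) m))"
    using P5 by blast
  interpret K: hk ?M n U
    apply unfold_locales
    apply (fact closed)
    apply (fact len)
    apply (fact loc)
    apply (fact idem)
    apply (fact comm)
    apply (fact braid)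
    done
  have finM: "finite ?M" using mchains_finite[OF g] .
  obtain W where W: "set W \<subseteq> ?N" "\<forall>j\<in>?N. \<forall>m\<in>?M. U j (Uapp U W m) = Uapp U W m"
    using K.absorb[OF subset_refl] by blast
  define Wf where "Wf = W @ [1..<n]"
  have Wf: "set Wf = ?N" using W by (auto simp: Wf_def)
  have cnt1: "card {m \<in> ?M. Uapp U Wf m = m} = 1"
    using count_fix[OF ga, of Wf] Wf flag_f_empty by simp
  obtain x0 where x0: "x0 \<in> ?M" using mchains_nonempty by blast
  define z where "z = Uapp U W x0"
  have zM: "z \<in> ?M" using K.Uapp_in W x0 z_def by blast
  have zfix: "\<And>i. i \<in> ?N \<Longrightarrow> U i z = z" using W x0 z_def by blast
  have fixWf: "\<And>y. y \<in> ?M \<Longrightarrow> \<forall>i\<in>?N. U i y = y \<Longrightarrow> Uapp U Wf y = y"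
    using K.Uapp_fix Wf by blast
  have zuniq: "\<And>y. y \<in> ?M \<Longrightarrow> \<forall>i\<in>?N. U i y = y \<Longrightarrow> y = z"
  proof -
    fix y assume y: "y \<in> ?M" "\<forall>i\<in>?N. U i y = y"
    have "y \<in> {m \<in> ?M. Uapp U Wf m = m}" "z \<in> {m \<in> ?M. Uapp U Wf m = m}"
      using fixWf y zM zfix by auto
    then show "y = z" using cnt1 by (metis card_1_singletonE singletonD)
  qed
  have m0z: "m0 TYPE('a) n U = z"
    unfolding m0_def
  proof (rule the_equality)
    show "z \<in> ?M \<and> (\<forall>i\<in>?N. U i z = z)" using zM zfix by blast
  next
    fix y assume "y \<in> ?M \<and> (\<forall>i\<in>?N. U i y = y)"
    then show "y = z" using zuniq by blast
  qed
  have acyc: "\<And>m w. m \<in> ?M \<Longrightarrow> w \<noteq> [] \<Longrightarrow> set w \<subseteq> ?N \<Longrightarrow> restless U w m \<Longrightarrow> Uapp U w m \<noteq> m"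
  proof
    fix m w assume m: "m \<in> ?M" and wne: "w \<noteq> []" and wN: "set w \<subseteq> ?N" and rl: "restless U w m"
      and cyc: "Uapp U w m = m"
    define J where "J = set w"
    define Kk where "Kk = ?N - J"
    obtain WJ where WJ: "set WJ \<subseteq> J" "\<forall>j\<in>J. \<forall>x\<in>?M. U j (Uapp U WJ x) = Uapp U WJ x"
      using K.absorb[of J] wN J_def by auto
    have WJN: "set WJ \<subseteq> ?N" using WJ wN J_def by auto
    define A where "A = {x \<in> ?M. Uapp U w x = x}"
    have cA: "card A = flag_f TYPE('a) Kk" using count_fix[OF ga wN] by (simp add: A_def Kk_def J_def)
    have finA: "finite A" using finM A_def by auto
    define r where "r = (\<lambda>x::'a list. \<lambda>k. if k \<in> Kk then Some (x ! k) else None)"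
    define e where "e = Uapp U WJ"
    have eM: "\<And>x. x \<in> ?M \<Longrightarrow> e x \<in> ?M" using K.Uapp_in WJN e_def by blast
    have eA: "\<And>x. x \<in> ?M \<Longrightarrow> e x \<in> A"
    proof -
      fix x assume x: "x \<in> ?M"
      have "Uapp U w (e x) = e x" using K.Uapp_fix[OF wN] WJ(2) x J_def e_def by blast
      then show "e x \<in> A" using eM x A_def by blast
    qed
    have er: "\<And>x. x \<in> ?M \<Longrightarrow> r (e x) = r x"
    proof -
      fix x assume x: "x \<in> ?M"
      have "\<And>k. k \<in> Kk \<Longrightarrow> e x ! k = x ! k"
      proof -
        fix k assume "k \<in> Kk"
        then have "k < Suc n" "k \<notin> set WJ" using WJ(1) Kk_def by auto
        then show "e x ! k = x ! k" using K.Uapp_nth[OF WJN x] e_def by simp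
      qed
      then show "r (e x) = r x" unfolding r_def by auto
    qed
    have rMA: "r ` ?M \<subseteq> r ` A"
    proof
      fix y assume "y \<in> r ` ?M"
      then obtain x where x: "x \<in> ?M" "y = r x" by blast
      then show "y \<in> r ` A" using eA er by (metis image_eqI)
    qed
    obtain v j where vj: "w = v @ [j]" using wne by (metis rev_exhaust)
    have jJ: "j \<in> J" using vj J_def by auto
    have mj: "U j m \<noteq> m" using rl vj by (simp add: restless_append)
    have em: "e m \<noteq> m"
    proof
      assume "e m = m"
      then have "U j m = m" using WJ(2) jJ m e_def by metis
      then show False using mj by simp
    qed
    have mA: "m \<in> A" using m cyc A_def by blast
    have "\<not> inj_on r A"
    proof
      assume "inj_on r A"
      then have "e m = m" using er[OF m] eA[OF m] mA by (meson inj_onD)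
      then show False using em by simp
    qed
    then have lt: "card (r ` A) < card A"
      using finA inj_on_iff_eq_card card_image_le by (metis le_neq_implies_less)
    define G where "G = {C::'a set. is_chain C \<and> rank ` C = Kk}"
    define h where "h = (\<lambda>f::nat \<Rightarrow> 'a option. (\<lambda>k. the (f k)) ` Kk)"
    have "G \<subseteq> h ` (r ` ?M)"
    proof
      fix C assume "C \<in> G"
      then have C: "is_chain C" "rank ` C = Kk" using G_def by auto
      obtain x where x: "x \<in> ?M" "C = (\<lambda>k. x ! k) ` (rank ` C)" using realize[OF g C(1)] by blast
      have "h (r x) = (\<lambda>k. x ! k) ` Kk" unfolding h_def r_def by (rule image_cong) auto
      then have "C = h (r x)" using x C(2) by simp
      then show "C \<in> h ` (r ` ?M)" using x by blast
    qed
    then have "card G \<le> card (h ` (r ` ?M))" using finM by (simp add: card_mono)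
    also have "\<dots> \<le> card (r ` ?M)" using finM by (simp add: card_image_le)
    also have "\<dots> \<le> card (r ` A)" using rMA finA by (simp add: card_mono)
    finally have "card G < card A" using lt by simp
    moreover have "card G = flag_f TYPE('a) Kk" by (simp add: G_def flag_f_def)
    ultimately show False using cA by simp
  qed
  have nobow: "\<And>i x1 x2 x3 x4. 1 \<le> i \<Longrightarrow> i+1 < n \<Longrightarrow> x1 \<in> ?M \<Longrightarrow> x2 \<in> ?M \<Longrightarrow> x3 \<in> ?M \<Longrightarrow> x4 \<in> ?M \<Longrightarrow>
     x1!i = x2!i \<Longrightarrow> x3!i = x4!i \<Longrightarrow> x1!(i+1) = x3!(i+1) \<Longrightarrow> x2!(i+1) = x4!(i+1) \<Longrightarrow>
     x1!i \<noteq> x3!i \<Longrightarrow> x1!(i+1) \<noteq> x2!(i+1) \<Longrightarrow> False"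
    by (rule nobow_poset[OF g bf]) assumption+
  interpret S: hsys ?M n U z
    apply unfold_locales
    apply (fact closed)
    apply (fact len)
    apply (fact loc)
    apply (fact idem)
    apply (fact comm)
    apply (fact braid)
    apply (fact nobow)
    apply (fact zM)
    apply (fact zfix)
    apply (fact zuniq)
    apply (fact acyc)
    apply (fact finM)
    done
  have om: "\<And>m. m \<in> ?M \<Longrightarrow> omega_m TYPE('a) n U m = S.sg m"
    unfolding omega_m_def m0z by (rule S.om_eq)
  have F1: "\<And>m w. m \<in> ?M \<Longrightarrow> set w \<subseteq> ?N \<Longrightarrow> restless U w m \<and> Uapp U w m = z \<Longrightarrow>
      set w \<subseteq> ?N \<and> sprod w = S.sg m \<and> length w = inv_count n (S.sg m)"
  proof -
    fix m w assume m: "m \<in> ?M" and w: "set w \<subseteq> ?N" and h: "restless U w m \<and> Uapp U w m = z"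
    note X = S.final[OF m, THEN conjunct1, rule_format, OF w, THEN conjunct1]
    show "set w \<subseteq> ?N \<and> sprod w = S.sg m \<and> length w = inv_count n (S.sg m)" using X h by (rule mp)
  qed
  have F2: "\<And>m w. m \<in> ?M \<Longrightarrow> set w \<subseteq> ?N \<Longrightarrow> set w \<subseteq> ?N \<and> sprod w = S.sg m \<and> length w = inv_count n (S.sg m) \<Longrightarrow>
      restless U w m \<and> Uapp U w m = z"
  proof -
    fix m w assume m: "m \<in> ?M" and w: "set w \<subseteq> ?N" and h: "set w \<subseteq> ?N \<and> sprod w = S.sg m \<and> length w = inv_count n (S.sg m)"
    note X = S.final[OF m, THEN conjunct1, rule_format, OF w, THEN conjunct2]
    show "restless U w m \<and> Uapp U w m = z" using X h by (rule mp)
  qed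
  have F3: "\<And>m i. m \<in> ?M \<Longrightarrow> i \<in> ?N \<Longrightarrow> (S.sg m i > S.sg m (i+1) \<longleftrightarrow> U i m \<noteq> m)"
  proof -
    fix m i assume m: "m \<in> ?M" and i: "i \<in> ?N"
    show "(S.sg m i > S.sg m (i+1) \<longleftrightarrow> U i m \<noteq> m)"
      using S.final[OF m, THEN conjunct2, rule_format, OF i, THEN conjunct1] .
  qed
  have F4: "\<And>m i. m \<in> ?M \<Longrightarrow> i \<in> ?N \<Longrightarrow> U i m \<noteq> m \<Longrightarrow> S.sg (U i m) = S.sg m \<circ> s i"
  proof -
    fix m i assume m: "m \<in> ?M" and i: "i \<in> ?N" and mv: "U i m \<noteq> m"
    show "S.sg (U i m) = S.sg m \<circ> s i"
      using S.final[OF m, THEN conjunct2, rule_format, OF i, THEN conjunct2] mv by (rule mp)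
  qed
  show ?thesis
  proof (intro conjI ballI allI impI)
    fix m w assume m: "m \<in> ?M" and w: "set w \<subseteq> ?N" and h: "restless U w m \<and> Uapp U w m = m0 TYPE('a) n U"
    have "set w \<subseteq> ?N \<and> sprod w = S.sg m \<and> length w = inv_count n (S.sg m)"
      using F1[OF m w] h m0z by simp
    then show "reduced_expr n w (omega_m TYPE('a) n U m)"
      unfolding reduced_expr_def om[OF m] .
  next
    fix m w assume m: "m \<in> ?M" and w: "set w \<subseteq> ?N" and h: "reduced_expr n w (omega_m TYPE('a) n U m)"
    have "set w \<subseteq> ?N \<and> sprod w = S.sg m \<and> length w = inv_count n (S.sg m)"
      using h unfolding reduced_expr_def om[OF m] .
    then have "restless U w m \<and> Uapp U w m = z" by (rule F2[OF m w])
    then show "restless U w m" "Uapp U w m = m0 TYPE('a) n U" using m0z by simp_all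
  next
    fix m i assume m: "m \<in> ?M" and i: "i \<in> ?N"
    show "has_descent (omega_m TYPE('a) n U m) i \<longleftrightarrow> U i m \<noteq> m"
      unfolding has_descent_def om[OF m] by (rule F3[OF m i])
  next
    fix m i assume m: "m \<in> ?M" and i: "i \<in> ?N" and mv: "U i m \<noteq> m"
    show "omega_m TYPE('a) n U (U i m) = omega_m TYPE('a) n U m \<circ> s i"
      unfolding om[OF m] om[OF closed[OF i m]] by (rule F4[OF m i mv])
  qed
qed


end
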